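(* Let $\alpha,\beta>0$, $\gamma\ge 0$, and let $(u,f)$ be a least-energy solution, i.e. $(u,f)\in X$ minimizes $I$ over $X$ and solves $$u''=\frac{\alpha\beta}{2}f^{2}u+\frac{u(u^{2}-1)}{r^{2}},\qquad f''=-\frac{2}{r}f'+\frac{\beta}{r^{2}}fu^{2}+\gamma f(f^{2}-1),\qquad r>0.$$ Then $0<u(r)<1$ and $0<f(r)<1$ for all $r>0$, and for every $\varepsilon\in(0,1)$: $$u(r)=O\Big(e^{-\sqrt{\frac{\alpha\beta}{2}}(1-\varepsilon)r}\Big)\ \ (r\to\infty),$$ $$f(r)=1+O\Big(e^{-\sqrt{2}\min\{\sqrt{\gamma},\sqrt{\alpha\beta}\}(1-\varepsilon)r}\Big)\ \ (r\to\infty)\quad\text{if }\gamma>0,$$ $$f(r)=1+O\Big(\frac1r\Big)\ \ (r\to\infty)\quad\text{if }\gamma=0,$$ $$u(r)=1+O\big(r^{2(1-\varepsilon)}\big),\qquad f(r)=O\Big(r^{\left(\sqrt{\frac14+\beta}-\frac12\right)(1-\varepsilon)}\Big)\quad (r\to0).$$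
   Context: For real parameters $\alpha,\beta>0$, $\gamma\ge0$, $$I(u,f)=\int_{0}^{\infty} \Big\{2(u')^{2}+\frac{(1-u^{2})^{2}}{r^{2}}+\alpha\big[ r^{2}(f')^{2}+\beta f^{2}u^{2}\big]+\frac{\alpha\gamma}{2}r^{2}(f^{2}-1)^{2}\Big\}\,dr,$$ and $X$ is the set of pairs $(u,f)$ of real functions on $(0,\infty)$, absolutely continuous on every compact subinterval of $(0,\infty)$, with $I(u,f)<\infty$ and $\lim_{r\to0}f(r)=0$, $\lim_{r\to0}u(r)=1$, $\lim_{r\to\infty}f(r)=1$, $\lim_{r\to\infty}u(r)=0$. *)

theory Defs
  imports "HOL-Analysis.Analysis" "HOL-Library.Landau_Symbols"
begin

definition abs_cont_on :: "real \<Rightarrow> real \<Rightarrow> (real \<Rightarrow> real) \<Rightarrow> bool" where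
  "abs_cont_on a b g \<longleftrightarrow>
     (\<forall>\<epsilon>>0. \<exists>\<delta>>0. \<forall>(n::nat) (x::nat \<Rightarrow> real) (y::nat \<Rightarrow> real).
        (\<forall>i<n. a \<le> x i \<and> x i \<le> y i \<and> y i \<le> b) \<and>
        (\<forall>i<n. \<forall>j<n. i \<noteq> j \<longrightarrow> y i \<le> x j \<or> y j \<le> x i) \<and>
        (\<Sum>i<n. y i - x i) < \<delta>
        \<longrightarrow> (\<Sum>i<n. \<bar>g (y i) - g (x i)\<bar>) < \<epsilon>)"

definition loc_abs_cont :: "(real \<Rightarrow> real) \<Rightarrow> bool" where
  "loc_abs_cont g \<longleftrightarrow> (\<forall>a b. 0 < a \<and> a \<le> b \<longrightarrow> abs_cont_on a b g)"

text \<open>The derivatives are the (almost everywhere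
  existing) pointwise derivatives \<open>deriv\<close>; the integrand is nonnegative, so
  the integral is taken as a nonnegative (extended) Lebesgue integral.\<close>
definition energy :: "real \<Rightarrow> real \<Rightarrow> real \<Rightarrow> (real \<Rightarrow> real) \<Rightarrow> (real \<Rightarrow> real) \<Rightarrow> ennreal" where
  "energy \<alpha> \<beta> \<gamma> u f =
     (\<integral>\<^sup>+ r \<in> {0<..}.
        ennreal (2 * (deriv u r)\<^sup>2 + (1 - (u r)\<^sup>2)\<^sup>2 / r\<^sup>2
                 + \<alpha> * (r\<^sup>2 * (deriv f r)\<^sup>2 + \<beta> * (f r)\<^sup>2 * (u r)\<^sup>2)
                 + \<alpha> * \<gamma> / 2 * r\<^sup>2 * ((f r)\<^sup>2 - 1)\<^sup>2) \<partial>lebesgue)"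

definition admissible :: "real \<Rightarrow> real \<Rightarrow> real \<Rightarrow> (real \<Rightarrow> real) \<Rightarrow> (real \<Rightarrow> real) \<Rightarrow> bool" where
  "admissible \<alpha> \<beta> \<gamma> u f \<longleftrightarrow>
     loc_abs_cont u \<and> loc_abs_cont f \<and> energy \<alpha> \<beta> \<gamma> u f < \<infinity> \<and>
     (f \<longlongrightarrow> 0) (at_right 0) \<and> (u \<longlongrightarrow> 1) (at_right 0) \<and>
     (f \<longlongrightarrow> 1) at_top \<and> (u \<longlongrightarrow> 0) at_top"

end

theory Submission
  imports Defs "HOL-Real_Asymp.Real_Asymp"
begin


lemma maxp_core:
  fixes d d' d'' :: "real \<Rightarrow> real"
  assumes e: "e > 0"
    and D1: "\<And>x. \<bar>c - x\<bar> < e \<Longrightarrow> (d has_real_derivative d' x) (at x)"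
    and D2: "(d' has_real_derivative d'' c) (at c)"
    and mx: "\<And>y. \<bar>c - y\<bar> < e \<Longrightarrow> d y \<le> d c"
    and pos: "d' c = 0 \<Longrightarrow> d'' c > 0"
  shows False
proof -
  have "d' c = 0" using DERIV_local_max[OF D1[of c] e] mx e by auto
  then have "d'' c > 0" by (rule pos)
  from DERIV_pos_inc_right[OF D2 this] obtain h0 where h0: "h0 > 0" "\<And>h. h > 0 \<Longrightarrow> h < h0 \<Longrightarrow> d' c < d' (c + h)"
    by blast
  define h where "h = min h0 e / 2"
  have hp: "h > 0" "h < h0" "h < e" using h0 e by (auto simp: h_def)
  have "\<exists>z>c. z < c + h \<and> d (c + h) - d c = (c + h - c) * d' z"
    by (rule MVT2) (use hp D1 in auto)
  then obtain z where z: "z > c" "z < c + h" "d (c + h) - d c = h * d' z" by auto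
  have "d' z > d' c" using h0(2)[of "z - c"] z hp by auto
  with \<open>d' c = 0\<close> hp have "h * d' z > 0" by simp
  with z have "d (c + h) > d c" by linarith
  moreover have "d (c + h) \<le> d c" using mx[of "c + h"] hp by auto
  ultimately show False by simp
qed

lemma maxp_top:
  fixes d d' d'' :: "real \<Rightarrow> real"
  assumes D1: "\<And>x. x > a \<Longrightarrow> (d has_real_derivative d' x) (at x)"
    and D2: "\<And>x. x > a \<Longrightarrow> (d' has_real_derivative d'' x) (at x)"
    and La: "(d \<longlongrightarrow> La) (at_right a)" "La \<le> 0"
    and Lb: "(d \<longlongrightarrow> Lb) at_top" "Lb \<le> 0"
    and pos: "\<And>x. x > a \<Longrightarrow> d x \<ge> 0 \<Longrightarrow> d' x = 0 \<Longrightarrow> d'' x > 0"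
    and x: "x > a"
  shows "d x < 0"
proof (rule ccontr)
  assume "\<not> d x < 0"
  hence dx: "d x \<ge> 0" by simp
  have "\<exists>c>a. d c \<ge> 0 \<and> (\<forall>y>a. d y \<le> d c)"
  proof (cases "\<exists>y>a. d y > 0")
    case False
    thus ?thesis using dx x by (intro exI[of _ x]) force
  next
    case True
    then obtain y where y: "y > a" "d y > 0" by auto
    have "eventually (\<lambda>r. d r < d y) (at_right a)"
      using La y by (intro order_tendstoD(2)[OF La(1)]) auto
    then obtain b where b: "b > a" "\<And>r. r > a \<Longrightarrow> r < b \<Longrightarrow> d r < d y"
      by (auto simp: eventually_at_right_field)
    have "eventually (\<lambda>r. d r < d y) at_top"
      using Lb y by (intro order_tendstoD(2)[OF Lb(1)]) auto
    then obtain B where B: "\<And>r. r \<ge> B \<Longrightarrow> d r < d y"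
      by (auto simp: eventually_at_top_linorder)
    define a1 where "a1 = (a + min b y) / 2"
    define b1 where "b1 = max B (y + 1)"
    have a1: "a < a1" "a1 < b" "a1 \<le> y" using b y by (auto simp: a1_def)
    have b1: "y \<le> b1" "B \<le> b1" by (auto simp: b1_def)
    have cont: "continuous_on {a1..b1} d"
      using D1 a1 by (intro continuous_at_imp_continuous_on ballI DERIV_isCont[OF D1]) auto
    obtain c where c: "c \<in> {a1..b1}" "\<And>z. z \<in> {a1..b1} \<Longrightarrow> d z \<le> d c"
      using continuous_attains_sup[OF compact_Icc _ cont] a1 b1 by auto
    have "d y \<le> d c" using c a1 b1 by auto
    have cgt: "c > a" using c a1 by auto
    have "\<forall>z>a. d z \<le> d c"
    proof (intro allI impI)
      fix z assume z: "z > a"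
      show "d z \<le> d c"
      proof (cases "z < a1")
        case True thus ?thesis using b(2)[of z] z a1 \<open>d y \<le> d c\<close> by auto
      next
        case False
        show ?thesis
        proof (cases "z > b1")
          case True thus ?thesis using B[of z] b1 \<open>d y \<le> d c\<close> by auto
        next
          case False thus ?thesis using c(2)[of z] \<open>\<not> z < a1\<close> by auto
        qed
      qed
    qed
    thus ?thesis using cgt \<open>d y \<le> d c\<close> y by (intro exI[of _ c]) auto
  qed
  then obtain c where c: "c > a" "d c \<ge> 0" "\<And>y. y > a \<Longrightarrow> d y \<le> d c" by auto
  show False
  proof (rule maxp_core[of "c - a" c d d' d''])
    show "c - a > 0" using c by simp
  qed (use c D1 D2 pos in auto)
qed

lemma maxp_int:
  fixes d d' d'' :: "real \<Rightarrow> real"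
  assumes D1: "\<And>x. x > a \<Longrightarrow> x < b \<Longrightarrow> (d has_real_derivative d' x) (at x)"
    and D2: "\<And>x. x > a \<Longrightarrow> x < b \<Longrightarrow> (d' has_real_derivative d'' x) (at x)"
    and La: "(d \<longlongrightarrow> La) (at_right a)" "La \<le> 0"
    and Lb: "(d \<longlongrightarrow> Lb) (at_left b)" "Lb \<le> 0"
    and pos: "\<And>x. x > a \<Longrightarrow> x < b \<Longrightarrow> d x \<ge> 0 \<Longrightarrow> d' x = 0 \<Longrightarrow> d'' x > 0"
    and x: "x > a" "x < b"
  shows "d x < 0"
proof (rule ccontr)
  assume "\<not> d x < 0"
  hence dx: "d x \<ge> 0" by simp
  have "\<exists>c>a. c < b \<and> d c \<ge> 0 \<and> (\<forall>y>a. y < b \<longrightarrow> d y \<le> d c)"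
  proof (cases "\<exists>y>a. y < b \<and> d y > 0")
    case False
    thus ?thesis using dx x by (intro exI[of _ x]) force
  next
    case True
    then obtain y where y: "y > a" "y < b" "d y > 0" by auto
    have "eventually (\<lambda>r. d r < d y) (at_right a)"
      using La y by (intro order_tendstoD(2)[OF La(1)]) auto
    then obtain a2 where a2: "a2 > a" "\<And>r. r > a \<Longrightarrow> r < a2 \<Longrightarrow> d r < d y"
      by (auto simp: eventually_at_right_field)
    have "eventually (\<lambda>r. d r < d y) (at_left b)"
      using Lb y by (intro order_tendstoD(2)[OF Lb(1)]) auto
    then obtain b2 where b2: "b2 < b" "\<And>r. r > b2 \<Longrightarrow> r < b \<Longrightarrow> d r < d y"
      by (auto simp: eventually_at_left_field)
    define a1 where "a1 = (a + min a2 y) / 2"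
    define b1 where "b1 = (b + max b2 y) / 2"
    have a1: "a < a1" "a1 < a2" "a1 \<le> y" using a2 y by (auto simp: a1_def)
    have b1: "y \<le> b1" "b2 < b1" "b1 < b" using b2 y by (auto simp: b1_def)
    have cont: "continuous_on {a1..b1} d"
      using D1 a1 b1 by (intro continuous_at_imp_continuous_on ballI DERIV_isCont[OF D1]) auto
    obtain c where c: "c \<in> {a1..b1}" "\<And>z. z \<in> {a1..b1} \<Longrightarrow> d z \<le> d c"
      using continuous_attains_sup[OF compact_Icc _ cont] a1 b1 by auto
    have "d y \<le> d c" using c a1 b1 by auto
    have cgt: "c > a" "c < b" using c a1 b1 by auto
    have "\<forall>z>a. z < b \<longrightarrow> d z \<le> d c"
    proof (intro allI impI)
      fix z assume z: "z > a" "z < b"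
      show "d z \<le> d c"
      proof (cases "z < a1")
        case True thus ?thesis using a2(2)[of z] z a1 \<open>d y \<le> d c\<close> by auto
      next
        case False
        show ?thesis
        proof (cases "z > b1")
          case True thus ?thesis using b2(2)[of z] z b1 \<open>d y \<le> d c\<close> by auto
        next
          case False thus ?thesis using c(2)[of z] \<open>\<not> z < a1\<close> by auto
        qed
      qed
    qed
    thus ?thesis using cgt \<open>d y \<le> d c\<close> y by (intro exI[of _ c]) auto
  qed
  then obtain c where c: "c > a" "c < b" "d c \<ge> 0" "\<And>y. y > a \<Longrightarrow> y < b \<Longrightarrow> d y \<le> d c" by auto
  show False
  proof (rule maxp_core[of "min (c - a) (b - c)" c d d' d''])
    show "min (c - a) (b - c) > 0" using c by simp
  qed (use c D1 D2 pos in auto)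
qed



lemma gron_zero:
  fixes E E' :: "real \<Rightarrow> real"
  assumes D: "\<And>x. x \<in> {a..b} \<Longrightarrow> (E has_real_derivative E' x) (at x)"
    and B: "\<And>x. x \<in> {a..b} \<Longrightarrow> \<bar>E' x\<bar> \<le> K * E x"
    and nn: "\<And>x. x \<in> {a..b} \<Longrightarrow> E x \<ge> 0"
    and c: "c \<in> {a..b}" "E c = 0"
    and x: "x \<in> {a..b}"
  shows "E x = 0"
proof (cases "x \<ge> c")
  case True
  have "E x * exp (- K * x) \<le> E c * exp (- K * c)"
  proof (rule DERIV_nonpos_imp_nonincreasing[OF True])
    fix t assume t: "c \<le> t" "t \<le> x"
    hence ta: "t \<in> {a..b}" using c x by auto
    show "\<exists>y. ((\<lambda>t. E t * exp (- K * t)) has_real_derivative y) (at t) \<and> y \<le> 0"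
    proof (rule exI[of _ "(E' t - K * E t) * exp (- K * t)"], intro conjI)
      show "((\<lambda>t. E t * exp (- K * t)) has_real_derivative (E' t - K * E t) * exp (- K * t)) (at t)"
        by (rule derivative_eq_intros D[OF ta] refl | simp add: algebra_simps)+
      have "E' t - K * E t \<le> 0" using B[OF ta] by (simp add: abs_le_iff)
      thus "(E' t - K * E t) * exp (- K * t) \<le> 0" by (simp add: mult_le_0_iff)
    qed
  qed
  hence "E x * exp (- K * x) \<le> 0" using c by simp
  hence "E x \<le> 0" by (simp add: mult_le_0_iff)
  thus ?thesis using nn[OF x] by simp
next
  case False
  hence xc: "x \<le> c" by simp
  have "E x * exp (K * x) \<le> E c * exp (K * c)"
  proof (rule DERIV_nonneg_imp_nondecreasing[OF xc])
    fix t assume t: "x \<le> t" "t \<le> c"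
    hence ta: "t \<in> {a..b}" using c x by auto
    show "\<exists>y. ((\<lambda>t. E t * exp (K * t)) has_real_derivative y) (at t) \<and> y \<ge> 0"
    proof (rule exI[of _ "(E' t + K * E t) * exp (K * t)"], intro conjI)
      show "((\<lambda>t. E t * exp (K * t)) has_real_derivative (E' t + K * E t) * exp (K * t)) (at t)"
        by (rule derivative_eq_intros D[OF ta] refl | simp add: algebra_simps)+
      have "E' t + K * E t \<ge> 0" using B[OF ta] by (simp add: abs_le_iff)
      thus "(E' t + K * E t) * exp (K * t) \<ge> 0" by simp
    qed
  qed
  hence "E x * exp (K * x) \<le> 0" using c by simp
  hence "E x \<le> 0" by (simp add: mult_le_0_iff)
  thus ?thesis using nn[OF x] by simp
qed

lemma cont_bounded:
  fixes p :: "real \<Rightarrow> real"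
  assumes "continuous_on {a..b} p"
  shows "\<exists>B. \<forall>x\<in>{a..b}. \<bar>p x\<bar> \<le> B"
proof -
  have "bounded (p ` {a..b})"
    by (intro compact_imp_bounded compact_continuous_image assms compact_Icc)
  then obtain B where "\<forall>y\<in>p ` {a..b}. norm y \<le> B" by (auto simp: bounded_iff)
  thus ?thesis by auto
qed

lemma ode_unique_zero:
  fixes w w' p q :: "real \<Rightarrow> real"
  assumes D1: "\<And>x. x \<in> {a..b} \<Longrightarrow> (w has_real_derivative w' x) (at x)"
    and D2: "\<And>x. x \<in> {a..b} \<Longrightarrow> (w' has_real_derivative (p x * w' x + q x * w x)) (at x)"
    and cp: "continuous_on {a..b} p" and cq: "continuous_on {a..b} q"
    and c: "c \<in> {a..b}" "w c = 0" "w' c = 0"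
    and x: "x \<in> {a..b}"
  shows "w x = 0"
proof -
  obtain P where P: "\<And>x. x \<in> {a..b} \<Longrightarrow> \<bar>p x\<bar> \<le> P" using cont_bounded[OF cp] by blast
  obtain Q where Q: "\<And>x. x \<in> {a..b} \<Longrightarrow> \<bar>q x\<bar> \<le> Q" using cont_bounded[OF cq] by blast
  define E where "E = (\<lambda>t. (w t)\<^sup>2 + (w' t)\<^sup>2)"
  define E' where "E' = (\<lambda>t. 2 * w t * w' t + 2 * w' t * (p t * w' t + q t * w t))"
  have "E x = 0"
  proof (rule gron_zero[of a b E E' "1 + Q + 2 * P" c])
    fix t assume t: "t \<in> {a..b}"
    show "(E has_real_derivative E' t) (at t)"
      unfolding E_def E'_def
      by (rule derivative_eq_intros D1[OF t] D2[OF t] | simp)+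
    show "E t \<ge> 0" by (simp add: E_def)
    have "\<bar>E' t\<bar> = \<bar>2 * w t * w' t * (1 + q t) + 2 * p t * (w' t)\<^sup>2\<bar>"
      by (simp add: E'_def algebra_simps power2_eq_square)
    also have "\<dots> \<le> \<bar>2 * w t * w' t\<bar> * \<bar>1 + q t\<bar> + 2 * \<bar>p t\<bar> * (w' t)\<^sup>2"
      by (simp add: abs_mult abs_triangle_ineq[THEN order_trans])
    also have "\<dots> \<le> E t * (1 + Q) + 2 * P * E t"
    proof (rule add_mono)
      have a1: "\<bar>2 * w t * w' t\<bar> \<le> E t"
        proof -
        have h: "0 \<le> (\<bar>w t\<bar> - \<bar>w' t\<bar>)\<^sup>2" by simp
        have "\<bar>2 * w t * w' t\<bar> = 2 * \<bar>w t\<bar> * \<bar>w' t\<bar>" by (simp add: abs_mult)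
        also have "\<dots> \<le> \<bar>w t\<bar>\<^sup>2 + \<bar>w' t\<bar>\<^sup>2" using h by (simp add: power2_diff)
        finally show ?thesis by (simp add: E_def)
      qed
      have "\<bar>1 + q t\<bar> \<le> 1 + Q" using Q[OF t] by simp
      thus "\<bar>2 * w t * w' t\<bar> * \<bar>1 + q t\<bar> \<le> E t * (1 + Q)"
        using a1 by (intro mult_mono) auto
      have "(w' t)\<^sup>2 \<le> E t" by (simp add: E_def)
      thus "2 * \<bar>p t\<bar> * (w' t)\<^sup>2 \<le> 2 * P * E t"
        using P[OF t] by (intro mult_mono) auto
    qed
    finally show "\<bar>E' t\<bar> \<le> (1 + Q + 2 * P) * E t" by (simp add: algebra_simps)
  qed (use c x in \<open>auto simp: E_def\<close>)
  thus ?thesis by (simp add: E_def)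
qed



definition lipon :: "(real \<Rightarrow> real) \<Rightarrow> real \<Rightarrow> real set \<Rightarrow> bool" where
  "lipon g L S \<longleftrightarrow> (\<forall>x\<in>S. \<forall>y\<in>S. \<bar>g y - g x\<bar> \<le> L * \<bar>y - x\<bar>)"

lemma lip_abs_cont:
  assumes "lipon g L {a..b}"
  shows "abs_cont_on a b g"
  unfolding abs_cont_on_def
proof (intro allI impI)
  fix \<epsilon> :: real assume e: "\<epsilon> > 0"
  define M where "M = \<bar>L\<bar> + 1"
  have M: "M > 0" "L \<le> M" by (auto simp: M_def)
  show "\<exists>\<delta>>0. \<forall>(n::nat) (x::nat \<Rightarrow> real) (y::nat \<Rightarrow> real).
        (\<forall>i<n. a \<le> x i \<and> x i \<le> y i \<and> y i \<le> b) \<and>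
        (\<forall>i<n. \<forall>j<n. i \<noteq> j \<longrightarrow> y i \<le> x j \<or> y j \<le> x i) \<and>
        (\<Sum>i<n. y i - x i) < \<delta>
        \<longrightarrow> (\<Sum>i<n. \<bar>g (y i) - g (x i)\<bar>) < \<epsilon>"
  proof (intro exI[of _ "\<epsilon> / M"] conjI allI impI)
    show "\<epsilon> / M > 0" using e M by simp
    fix n :: nat and x y :: "nat \<Rightarrow> real"
    assume H: "(\<forall>i<n. a \<le> x i \<and> x i \<le> y i \<and> y i \<le> b) \<and>
        (\<forall>i<n. \<forall>j<n. i \<noteq> j \<longrightarrow> y i \<le> x j \<or> y j \<le> x i) \<and>
        (\<Sum>i<n. y i - x i) < \<epsilon> / M"
    have "(\<Sum>i<n. \<bar>g (y i) - g (x i)\<bar>) \<le> (\<Sum>i<n. M * (y i - x i))"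
    proof (rule sum_mono)
      fix i assume "i \<in> {..<n}"
      hence i: "a \<le> x i" "x i \<le> y i" "y i \<le> b" using H by auto
      have xi: "x i \<in> {a..b}" "y i \<in> {a..b}" using i by auto
      have "\<bar>g (y i) - g (x i)\<bar> \<le> L * \<bar>y i - x i\<bar>"
        using assms xi unfolding lipon_def by blast
      also have "\<dots> \<le> M * \<bar>y i - x i\<bar>" using M by (intro mult_right_mono) auto
      finally show "\<bar>g (y i) - g (x i)\<bar> \<le> M * (y i - x i)" using i by simp
    qed
    also have "\<dots> = M * (\<Sum>i<n. y i - x i)" by (simp add: sum_distrib_left)
    also have "\<dots> < M * (\<epsilon> / M)" using H M by (intro mult_strict_left_mono) auto
    also have "\<dots> = \<epsilon>" using M by simp
    finally show "(\<Sum>i<n. \<bar>g (y i) - g (x i)\<bar>) < \<epsilon>" .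
  qed
qed

lemma lip_chain:
  assumes "lipon g L {p..q}" "lipon g L {q..t}" "p \<le> q" "q \<le> t"
  shows "lipon g L {p..t}"
  unfolding lipon_def
proof (intro ballI)
  fix x y assume xy: "x \<in> {p..t}" "y \<in> {p..t}"
  have L: "\<And>x y. x \<in> {p..q} \<Longrightarrow> y \<in> {q..t} \<Longrightarrow> \<bar>g y - g x\<bar> \<le> L * \<bar>y - x\<bar>"
  proof -
    fix x y assume xy: "x \<in> {p..q}" "y \<in> {q..t}"
    have "\<bar>g y - g x\<bar> \<le> \<bar>g y - g q\<bar> + \<bar>g q - g x\<bar>" by simp
    also have "\<dots> \<le> L * \<bar>y - q\<bar> + L * \<bar>q - x\<bar>"
    proof (rule add_mono)
      have "q \<in> {q..t}" "q \<in> {p..q}" using assms(3,4) by auto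
      thus "\<bar>g y - g q\<bar> \<le> L * \<bar>y - q\<bar>" "\<bar>g q - g x\<bar> \<le> L * \<bar>q - x\<bar>"
        using assms(1,2) xy unfolding lipon_def by blast+
    qed
    also have "\<dots> = L * \<bar>y - x\<bar>" using xy by (simp add: algebra_simps)
    finally show "\<bar>g y - g x\<bar> \<le> L * \<bar>y - x\<bar>" .
  qed
  show "\<bar>g y - g x\<bar> \<le> L * \<bar>y - x\<bar>"
  proof (cases "x \<le> q")
    case True
    show ?thesis
    proof (cases "y \<le> q")
      case True
      thus ?thesis using assms(1) xy \<open>x \<le> q\<close> unfolding lipon_def by auto
    next
      case False thus ?thesis using L[of x y] xy \<open>x \<le> q\<close> by auto
    qed
  next
    case False
    show ?thesis
    proof (cases "y \<le> q")
      case True thus ?thesis using L[of y x] xy \<open>\<not> x \<le> q\<close> by (auto simp: abs_minus_commute)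
    next
      case False thus ?thesis using assms(2) xy \<open>\<not> x \<le> q\<close> unfolding lipon_def by auto
    qed
  qed
qed

lemma lipon_subset: "lipon g L S \<Longrightarrow> T \<subseteq> S \<Longrightarrow> lipon g L T"
  unfolding lipon_def by blast

lemma lipon_cong: "lipon g L S \<Longrightarrow> (\<And>x. x \<in> S \<Longrightarrow> h x = g x) \<Longrightarrow> lipon h L S"
  unfolding lipon_def by simp

lemma lip_deriv:
  assumes D: "\<And>x. x \<in> {p..q} \<Longrightarrow> (w has_real_derivative w' x) (at x)"
    and B: "\<And>x. x \<in> {p..q} \<Longrightarrow> \<bar>w' x\<bar> \<le> L"
  shows "lipon w L {p..q}"
  unfolding lipon_def
proof (intro ballI)
  have *: "\<bar>w y - w x\<bar> \<le> L * \<bar>y - x\<bar>" if xy: "x \<in> {p..q}" "y \<in> {p..q}" "x < y" for x y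
  proof -
    obtain z where z: "z > x" "z < y" "w y - w x = (y - x) * w' z"
      using MVT2[of x y w w'] D xy by force
    have "\<bar>w y - w x\<bar> = (y - x) * \<bar>w' z\<bar>" using z xy by (simp add: abs_mult)
    also have "\<dots> \<le> (y - x) * L" using B[of z] z xy by (intro mult_left_mono) auto
    finally show ?thesis using xy by (simp add: mult.commute)
  qed
  fix x y assume xy: "x \<in> {p..q}" "y \<in> {p..q}"
  show "\<bar>w y - w x\<bar> \<le> L * \<bar>y - x\<bar>"
    using *[of x y] *[of y x] xy by (cases x y rule: linorder_cases) (auto simp: abs_minus_commute)
qed

definition flip :: "(real \<Rightarrow> real) \<Rightarrow> real \<Rightarrow> real \<Rightarrow> real \<Rightarrow> real" where
  "flip w a b r = (if r \<le> a then w r else if r < b then w a + ((- w b) - w a) / (b - a) * (r - a) else - w r)"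

lemma flip_left: "r \<le> a \<Longrightarrow> flip w a b r = w r"
  by (simp add: flip_def)

lemma flip_right: "a < b \<Longrightarrow> b \<le> r \<Longrightarrow> flip w a b r = - w r"
  by (simp add: flip_def)

lemma flip_mid: "a < b \<Longrightarrow> a \<le> r \<Longrightarrow> r \<le> b \<Longrightarrow>
   flip w a b r = w a + ((- w b) - w a) / (b - a) * (r - a)"
  by (cases "r = b") (auto simp: flip_def)

lemma flip_mid_bound:
  assumes "a < b" "a \<le> r" "r \<le> b"
  shows "\<bar>flip w a b r\<bar> \<le> max \<bar>w a\<bar> \<bar>w b\<bar>"
proof -
  define t where "t = (r - a) / (b - a)"
  have t: "0 \<le> t" "t \<le> 1" using assms by (auto simp: t_def divide_simps)
  have "flip w a b r = w a + ((- w b) - w a) * t"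
    using assms by (simp add: flip_mid t_def)
  also have "\<dots> = (1 - t) * w a + t * (- w b)" by (simp add: algebra_simps)
  finally have "flip w a b r = (1 - t) * w a + t * (- w b)" .
  also have "\<bar>\<dots>\<bar> \<le> (1 - t) * \<bar>w a\<bar> + t * \<bar>w b\<bar>"
    using t by (smt (verit) abs_mult abs_minus_cancel abs_of_nonneg)
  also have "\<dots> \<le> (1 - t) * max \<bar>w a\<bar> \<bar>w b\<bar> + t * max \<bar>w a\<bar> \<bar>w b\<bar>"
    using t by (intro add_mono mult_left_mono) auto
  also have "\<dots> = max \<bar>w a\<bar> \<bar>w b\<bar>" by (simp add: algebra_simps)
  finally show ?thesis .
qed

lemma flip_deriv_left:
  assumes "(w has_real_derivative w' r) (at r)" "r < a"
  shows "(flip w a b has_real_derivative w' r) (at r)"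
  by (rule has_field_derivative_transform_within_open[OF assms(1), of "{..<a}"])
     (use assms in \<open>auto simp: flip_def\<close>)

lemma flip_deriv_right:
  assumes "(w has_real_derivative w' r) (at r)" "b < r" "a < b"
  shows "(flip w a b has_real_derivative - w' r) (at r)"
proof -
  have "((\<lambda>x. - w x) has_real_derivative - w' r) (at r)"
    using assms(1) by (rule derivative_intros)
  thus ?thesis
    by (rule has_field_derivative_transform_within_open[of _ _ _ "{b<..}"])
       (use assms in \<open>auto simp: flip_def\<close>)
qed

lemma flip_deriv_mid:
  assumes "a < r" "r < b"
  shows "(flip w a b has_real_derivative ((- w b) - w a) / (b - a)) (at r)"
proof -
  have "((\<lambda>x. w a + ((- w b) - w a) / (b - a) * (x - a)) has_real_derivative ((- w b) - w a) / (b - a)) (at r)"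
    by (rule derivative_eq_intros refl | simp)+
  thus ?thesis
    by (rule has_field_derivative_transform_within_open[of _ _ _ "{a<..<b}"])
       (use assms in \<open>auto simp: flip_def\<close>)
qed

lemma flip_loc_abs_cont:
  assumes abq: "0 < a" "a < b"
    and D1: "\<And>x. x > 0 \<Longrightarrow> (w has_real_derivative w' x) (at x)"
    and C: "\<And>x. x > 0 \<Longrightarrow> isCont w' x"
  shows "loc_abs_cont (flip w a b)"
  unfolding loc_abs_cont_def
proof (intro allI impI)
  fix a0 b0 :: real assume ab0: "0 < a0 \<and> a0 \<le> b0"
  define P where "P = min a0 a"
  define Q where "Q = max b0 b"
  have PQ: "0 < P" "P \<le> a" "b \<le> Q" "P \<le> a0" "b0 \<le> Q" using abq ab0 by (auto simp: P_def Q_def)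
  have "continuous_on {P..Q} w'"
    using PQ C by (intro continuous_at_imp_continuous_on) auto
  then obtain L1 where L1: "\<And>x. x \<in> {P..Q} \<Longrightarrow> \<bar>w' x\<bar> \<le> L1" using cont_bounded by blast
  define s where "s = ((- w b) - w a) / (b - a)"
  define L where "L = max L1 \<bar>s\<bar>"
  have wl: "lipon w L {P..Q}"
    by (rule lip_deriv[of _ _ _ w']) (use D1 PQ L1 in \<open>force simp: L_def\<close>)+
  have l1: "lipon (flip w a b) L {P..a}"
    by (rule lipon_cong[OF lipon_subset[OF wl]]) (use PQ abq in \<open>auto simp: flip_left\<close>)
  have wl2: "lipon (\<lambda>x. - w x) L {P..Q}" unfolding lipon_def
  proof (intro ballI)
    fix x y assume "x \<in> {P..Q}" "y \<in> {P..Q}"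
    hence "\<bar>w y - w x\<bar> \<le> L * \<bar>y - x\<bar>" using wl unfolding lipon_def by blast
    moreover have "\<bar>- w y - - w x\<bar> = \<bar>w y - w x\<bar>" by arith
    ultimately show "\<bar>- w y - - w x\<bar> \<le> L * \<bar>y - x\<bar>" by simp
  qed
  have l3: "lipon (flip w a b) L {b..Q}"
    by (rule lipon_cong[OF lipon_subset[OF wl2]]) (use PQ abq in \<open>auto simp: flip_right\<close>)
  have l2: "lipon (flip w a b) L {a..b}"
    unfolding lipon_def
  proof (intro ballI)
    fix x y assume xy: "x \<in> {a..b}" "y \<in> {a..b}"
    have "flip w a b y - flip w a b x = s * (y - a) - s * (x - a)"
      using xy abq by (simp add: flip_mid s_def)
    also have "\<dots> = s * (y - x)" by (simp add: algebra_simps)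
    finally have "flip w a b y - flip w a b x = s * (y - x)" .
    hence "\<bar>flip w a b y - flip w a b x\<bar> = \<bar>s\<bar> * \<bar>y - x\<bar>" by (simp add: abs_mult)
    also have "\<dots> \<le> L * \<bar>y - x\<bar>" by (intro mult_right_mono) (auto simp: L_def)
    finally show "\<bar>flip w a b y - flip w a b x\<bar> \<le> L * \<bar>y - x\<bar>" .
  qed
  have "lipon (flip w a b) L {P..b}"
    by (rule lip_chain[OF l1 l2]) (use PQ abq in auto)
  hence "lipon (flip w a b) L {P..Q}"
    by (rule lip_chain[OF _ l3]) (use PQ abq in auto)
  hence "lipon (flip w a b) L {a0..b0}" by (rule lipon_subset) (use PQ in auto)
  thus "abs_cont_on a0 b0 (flip w a b)" by (rule lip_abs_cont)
qed

lemma flip_lim0: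
  assumes "(w \<longlongrightarrow> l) (at_right 0)" "0 < a"
  shows "(flip w a b \<longlongrightarrow> l) (at_right 0)"
proof -
  have "eventually (\<lambda>r. w r = flip w a b r) (at_right 0)"
    using assms(2) by (auto simp: eventually_at_right_field flip_def intro!: exI[of _ a])
  thus ?thesis using assms(1) by (rule Lim_transform_eventually[rotated])
qed

lemma flip_limtop:
  assumes "((\<lambda>r. - w r) \<longlongrightarrow> l) at_top" "a < b"
  shows "(flip w a b \<longlongrightarrow> l) at_top"
proof -
  have "eventually (\<lambda>r. - w r = flip w a b r) at_top"
    using assms(2) by (auto simp: eventually_at_top_linorder flip_def intro!: exI[of _ b])
  thus ?thesis using assms(1) by (rule Lim_transform_eventually[rotated])
qed



definition Gd :: "real \<Rightarrow> real \<Rightarrow> real \<Rightarrow> real \<Rightarrow> real \<Rightarrow> real \<Rightarrow> real \<Rightarrow> real \<Rightarrow> real" where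
  "Gd \<alpha> \<beta> \<gamma> p x q y r = 2 * p\<^sup>2 + (1 - x\<^sup>2)\<^sup>2 / r\<^sup>2
                 + \<alpha> * (r\<^sup>2 * q\<^sup>2 + \<beta> * y\<^sup>2 * x\<^sup>2)
                 + \<alpha> * \<gamma> / 2 * r\<^sup>2 * (y\<^sup>2 - 1)\<^sup>2"

lemma energy_Gd: "energy \<alpha> \<beta> \<gamma> u f =
  (\<integral>\<^sup>+ r. ennreal (Gd \<alpha> \<beta> \<gamma> (deriv u r) (u r) (deriv f r) (f r) r) * indicator {0<..} r \<partial>lebesgue)"
  by (simp add: energy_def Gd_def)

lemma Gd_nonneg: "\<alpha> \<ge> 0 \<Longrightarrow> \<beta> \<ge> 0 \<Longrightarrow> \<gamma> \<ge> 0 \<Longrightarrow> Gd \<alpha> \<beta> \<gamma> p x q y r \<ge> 0"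
  unfolding Gd_def by (intro add_nonneg_nonneg mult_nonneg_nonneg) auto

lemma nn_superadd:
  assumes h: "simple_function M h"
  shows "integral\<^sup>N M f + integral\<^sup>S M h \<le> integral\<^sup>N M (\<lambda>x. f x + h x)"
proof -
  have ne: "{g. simple_function M g \<and> g \<le> f} \<noteq> {}"
    by (intro exI[of _ "\<lambda>_. 0"] notI) (auto simp: le_fun_def dest: equals0D[of _ "\<lambda>_. 0"])
  have "integral\<^sup>N M f + integral\<^sup>S M h = (SUP g\<in>{g. simple_function M g \<and> g \<le> f}. integral\<^sup>S M g + integral\<^sup>S M h)"
    unfolding nn_integral_def by (rule ennreal_SUP_add_left[OF ne, symmetric])
  also have "\<dots> \<le> integral\<^sup>N M (\<lambda>x. f x + h x)"
  proof (rule SUP_least)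
    fix g assume g: "g \<in> {g. simple_function M g \<and> g \<le> f}"
    have "integral\<^sup>S M g + integral\<^sup>S M h = integral\<^sup>S M (\<lambda>x. g x + h x)"
      using g h by (subst simple_integral_add) auto
    also have "\<dots> \<le> integral\<^sup>N M (\<lambda>x. f x + h x)"
      unfolding nn_integral_def
      by (rule SUP_upper) (use g h in \<open>auto simp: le_fun_def intro: add_right_mono\<close>)
    finally show "integral\<^sup>S M g + integral\<^sup>S M h \<le> integral\<^sup>N M (\<lambda>x. f x + h x)" .
  qed
  finally show ?thesis .
qed

lemma energy_strict:
  fixes u f v g :: "real \<Rightarrow> real"
  assumes prm: "\<alpha> \<ge> 0" "\<beta> \<ge> 0" "\<gamma> \<ge> 0"
    and fin: "energy \<alpha> \<beta> \<gamma> u f < \<infinity>"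
    and ab: "0 \<le> a" "a < b" and eta: "\<eta> > 0"
    and out: "\<And>r. r > 0 \<Longrightarrow> r < a \<or> r > b \<Longrightarrow>
        Gd \<alpha> \<beta> \<gamma> (deriv v r) (v r) (deriv g r) (g r) r = Gd \<alpha> \<beta> \<gamma> (deriv u r) (u r) (deriv f r) (f r) r"
    and mid: "\<And>r. a < r \<Longrightarrow> r < b \<Longrightarrow>
        Gd \<alpha> \<beta> \<gamma> (deriv v r) (v r) (deriv g r) (g r) r + \<eta> \<le> Gd \<alpha> \<beta> \<gamma> (deriv u r) (u r) (deriv f r) (f r) r"
  shows "energy \<alpha> \<beta> \<gamma> v g < energy \<alpha> \<beta> \<gamma> u f"
proof -
  define Gu where "Gu r = Gd \<alpha> \<beta> \<gamma> (deriv u r) (u r) (deriv f r) (f r) r" for r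
  define Gv where "Gv r = Gd \<alpha> \<beta> \<gamma> (deriv v r) (v r) (deriv g r) (g r) r" for r
  define S where "S r = ennreal \<eta> * indicator {a<..<b} r" for r
  have Sm: "simple_function lebesgue S" unfolding S_def
    by (intro simple_function_mult simple_function_indicator) auto
  have intS: "integral\<^sup>S lebesgue S = ennreal (\<eta> * (b - a))"
  proof -
    have "integral\<^sup>S lebesgue S = integral\<^sup>N lebesgue S"
      by (rule nn_integral_eq_simple_integral[OF Sm, symmetric])
    also have "\<dots> = ennreal \<eta> * emeasure lebesgue {a<..<b}"
      unfolding S_def by (rule nn_integral_cmult_indicator) auto
    also have "\<dots> = ennreal (\<eta> * (b - a))" using ab eta by (simp add: ennreal_mult)
    finally show ?thesis .
  qed
  have ae: "AE r in lebesgue. r \<noteq> a \<and> r \<noteq> b"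
    by (intro AE_completion AE_conjI AE_lborel_singleton)
  have "AE r in lebesgue. ennreal (Gv r) * indicator {0<..} r + S r \<le> ennreal (Gu r) * indicator {0<..} r"
    using ae
  proof (rule AE_mp, intro AE_I2 impI)
    fix r :: real assume r: "r \<noteq> a \<and> r \<noteq> b"
    show "ennreal (Gv r) * indicator {0<..} r + S r \<le> ennreal (Gu r) * indicator {0<..} r"
    proof (cases "a < r \<and> r < b")
      case True
      hence "r > 0" using ab by auto
      have "ennreal (Gv r) + ennreal \<eta> = ennreal (Gv r + \<eta>)"
        using eta Gd_nonneg[OF prm] by (simp add: Gv_def ennreal_plus)
      also have "\<dots> \<le> ennreal (Gu r)" using mid True by (auto simp: Gu_def Gv_def intro: ennreal_leI)
      finally show ?thesis using True \<open>r > 0\<close> by (simp add: S_def)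
    next
      case False
      hence S0: "S r = 0" by (simp add: S_def)
      show ?thesis
      proof (cases "r > 0")
        case True
        hence "r < a \<or> r > b" using False r by auto
        thus ?thesis using out[OF True] S0 True by (simp add: Gu_def Gv_def)
      qed (simp add: S0)
    qed
  qed
  hence "integral\<^sup>N lebesgue (\<lambda>r. ennreal (Gv r) * indicator {0<..} r + S r)
         \<le> integral\<^sup>N lebesgue (\<lambda>r. ennreal (Gu r) * indicator {0<..} r)"
    by (rule nn_integral_mono_AE)
  moreover have "integral\<^sup>N lebesgue (\<lambda>r. ennreal (Gv r) * indicator {0<..} r) + integral\<^sup>S lebesgue S
       \<le> integral\<^sup>N lebesgue (\<lambda>r. ennreal (Gv r) * indicator {0<..} r + S r)"
    by (rule nn_superadd[OF Sm])
  ultimately have "energy \<alpha> \<beta> \<gamma> v g + ennreal (\<eta> * (b - a)) \<le> energy \<alpha> \<beta> \<gamma> u f"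
    unfolding energy_Gd Gu_def Gv_def intS by simp
  moreover have "ennreal (\<eta> * (b - a)) > 0" using eta ab by simp
  ultimately show ?thesis using fin
    by (metis add.right_neutral ennreal_add_left_cancel_less le_less_trans not_less_iff_gr_or_eq top.not_eq_extremum order.strict_trans2)
qed



lemma choose_delta:
  fixes w w' :: "real \<Rightarrow> real"
  assumes D: "(w has_real_derivative c) (at r0)"
    and Cw: "isCont w r0" and Cw': "isCont w' r0" and c: "w' r0 = c" "c \<noteq> 0"
    and r0: "r0 > 0" and w0: "w r0 = 0" and \<rho>: "\<rho> > 0" and \<kappa>: "\<kappa> > 0"
  shows "\<exists>\<delta>>0. \<delta> \<le> r0 / 2 \<and> (\<forall>r. \<bar>r - r0\<bar> \<le> \<delta> \<longrightarrow> \<bar>w r\<bar> \<le> \<rho> \<and> (w' r)\<^sup>2 \<ge> c\<^sup>2 / 4) \<and>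
      \<bar>(w (r0 + \<delta>) + w (r0 - \<delta>)) / (2 * \<delta>)\<bar> \<le> \<kappa>"
proof -
  obtain d1 where d1: "d1 > 0" "\<And>x. x \<noteq> r0 \<Longrightarrow> \<bar>x - r0\<bar> < d1 \<Longrightarrow> \<bar>w x - w r0\<bar> < \<rho>"
    using Cw \<rho> unfolding isCont_def LIM_eq by force
  obtain d2 where d2: "d2 > 0" "\<And>x. x \<noteq> r0 \<Longrightarrow> \<bar>x - r0\<bar> < d2 \<Longrightarrow> \<bar>w' x - w' r0\<bar> < \<bar>c\<bar> / 2"
    using Cw' c unfolding isCont_def LIM_eq by (metis zero_less_abs_iff half_gt_zero real_norm_def)
  obtain d3 where d3: "d3 > 0" "\<And>h. h \<noteq> 0 \<Longrightarrow> \<bar>h\<bar> < d3 \<Longrightarrow> \<bar>(w (r0 + h) - w r0) / h - c\<bar> < \<kappa>"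
    using D \<kappa> unfolding DERIV_def LIM_eq by force
  define \<delta> where "\<delta> = min (min d1 d2) (min d3 r0) / 2"
  have \<delta>: "\<delta> > 0" "\<delta> < d1" "\<delta> < d2" "\<delta> < d3" "\<delta> \<le> r0 / 2"
    using d1 d2 d3 r0 by (auto simp: \<delta>_def)
  have P: "\<bar>w r\<bar> \<le> \<rho> \<and> (w' r)\<^sup>2 \<ge> c\<^sup>2 / 4" if r: "\<bar>r - r0\<bar> \<le> \<delta>" for r
  proof (cases "r = r0")
    case True thus ?thesis using w0 c \<rho> by (simp add: power_divide)
  next
    case False
    have "\<bar>w r\<bar> \<le> \<rho>" using d1(2)[OF False] r \<delta> w0 by auto
    moreover have "\<bar>w' r - c\<bar> < \<bar>c\<bar> / 2" using d2(2)[OF False] r \<delta> c by auto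
    hence "\<bar>w' r\<bar> \<ge> \<bar>c\<bar> / 2" by linarith
    hence "(\<bar>c\<bar> / 2)\<^sup>2 \<le> \<bar>w' r\<bar>\<^sup>2" by (intro power_mono) auto
    hence "(w' r)\<^sup>2 \<ge> c\<^sup>2 / 4" by (simp add: power_divide)
    ultimately show ?thesis by simp
  qed
  have q1: "\<bar>w (r0 + \<delta>) / \<delta> - c\<bar> < \<kappa>" using d3(2)[of \<delta>] \<delta> w0 by auto
  have q2: "\<bar>w (r0 - \<delta>) / (- \<delta>) - c\<bar> < \<kappa>" using d3(2)[of "- \<delta>"] \<delta> w0 by auto
  have "(w (r0 + \<delta>) + w (r0 - \<delta>)) / (2 * \<delta>) = (w (r0 + \<delta>) / \<delta> - c - (w (r0 - \<delta>) / (- \<delta>) - c)) / 2"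
    using \<delta> by (simp add: field_simps)
  also have "\<bar>\<dots>\<bar> \<le> \<kappa>" using q1 q2 by (simp add: abs_le_iff) linarith
  finally show ?thesis using \<delta> P by (intro exI[of _ \<delta>]) auto
qed



lemma sq_diff_bound:
  fixes A B \<rho> :: real
  assumes "0 \<le> A" "A \<le> \<rho>" "0 \<le> B" "B \<le> \<rho>" "\<rho> \<le> 1"
  shows "(1 - A)\<^sup>2 - (1 - B)\<^sup>2 \<ge> - 2 * \<rho>" and "\<bar>(A - 1)\<^sup>2 - (B - 1)\<^sup>2\<bar> \<le> 2 * \<rho>"
proof -
  have e: "(1 - A)\<^sup>2 - (1 - B)\<^sup>2 = (B - A) * (2 - A - B)" by (simp add: power2_eq_square algebra_simps)
  have "\<bar>(B - A) * (2 - A - B)\<bar> \<le> \<rho> * 2"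
    unfolding abs_mult using assms by (intro mult_mono) auto
  thus "(1 - A)\<^sup>2 - (1 - B)\<^sup>2 \<ge> - 2 * \<rho>" and "\<bar>(A - 1)\<^sup>2 - (B - 1)\<^sup>2\<bar> \<le> 2 * \<rho>"
    using e by (simp_all add: abs_le_iff power2_commute algebra_simps)
qed

lemma sq_le_of_abs: "\<bar>x::real\<bar> \<le> \<rho> \<Longrightarrow> x\<^sup>2 \<le> \<rho>\<^sup>2"
  by (metis abs_ge_zero order_trans power2_abs power_mono)

lemma Gd_diff_u:
  fixes \<alpha> \<beta> \<gamma> r r0 \<rho> \<kappa> c F :: real
  assumes prm: "\<alpha> \<ge> 0" "\<beta> \<ge> 0" "\<gamma> \<ge> 0"
    and r: "r0 > 0" "r \<ge> r0 / 2"
    and x: "\<bar>x1\<bar> \<le> \<rho>" "\<bar>x2\<bar> \<le> \<rho>" "\<rho> \<le> 1"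
    and y: "y\<^sup>2 \<le> F"
    and p: "p1\<^sup>2 \<ge> c\<^sup>2 / 4" "p2\<^sup>2 \<le> \<kappa>\<^sup>2" "\<kappa>\<^sup>2 \<le> c\<^sup>2 / 16"
    and rho: "\<rho>\<^sup>2 * (8 / r0\<^sup>2 + \<alpha> * \<beta> * F) \<le> c\<^sup>2 / 8"
  shows "Gd \<alpha> \<beta> \<gamma> p2 x2 q y r + c\<^sup>2 / 4 \<le> Gd \<alpha> \<beta> \<gamma> p1 x1 q y r"
proof -
  have rp: "r > 0" using r by simp
  have F0: "F \<ge> 0" using y zero_le_power2[of y] by linarith
  have A: "x1\<^sup>2 \<le> \<rho>\<^sup>2" "x2\<^sup>2 \<le> \<rho>\<^sup>2" using x by (auto intro: sq_le_of_abs)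
  have r1: "\<rho>\<^sup>2 \<le> 1" using x by (simp add: power_le_one)
  have t1: "(1 - x1\<^sup>2)\<^sup>2 - (1 - x2\<^sup>2)\<^sup>2 \<ge> - 2 * \<rho>\<^sup>2"
    using sq_diff_bound(1)[of "x1\<^sup>2" "\<rho>\<^sup>2" "x2\<^sup>2"] A r1 by auto
  have rr: "r\<^sup>2 \<ge> r0\<^sup>2 / 4"
  proof -
    have "(r0 / 2)\<^sup>2 \<le> r\<^sup>2" using r by (intro power_mono) auto
    thus ?thesis by (simp add: power_divide)
  qed
  have "2 * \<rho>\<^sup>2 / r\<^sup>2 \<le> 2 * \<rho>\<^sup>2 / (r0\<^sup>2 / 4)"
    using rr r by (intro divide_left_mono) auto
  moreover have "((1 - x1\<^sup>2)\<^sup>2 - (1 - x2\<^sup>2)\<^sup>2) / r\<^sup>2 \<ge> (- 2 * \<rho>\<^sup>2) / r\<^sup>2"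
    using t1 rp by (intro divide_right_mono) auto
  moreover have "2 * \<rho>\<^sup>2 / (r0\<^sup>2 / 4) = \<rho>\<^sup>2 * (8 / r0\<^sup>2)" by simp
  ultimately have t1': "((1 - x1\<^sup>2)\<^sup>2 - (1 - x2\<^sup>2)\<^sup>2) / r\<^sup>2 \<ge> - (\<rho>\<^sup>2 * (8 / r0\<^sup>2))"
    using minus_divide_left[of "2 * \<rho>\<^sup>2" "r\<^sup>2"] by linarith
  have "\<bar>x1\<^sup>2 - x2\<^sup>2\<bar> \<le> \<rho>\<^sup>2"
    using A zero_le_power2[of x1] zero_le_power2[of x2] unfolding abs_le_iff by linarith
  hence "\<bar>\<alpha> * \<beta> * y\<^sup>2 * (x1\<^sup>2 - x2\<^sup>2)\<bar> \<le> \<alpha> * \<beta> * F * \<rho>\<^sup>2"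
    unfolding abs_mult using prm y F0 by (intro mult_mono) auto
  hence t2: "\<alpha> * \<beta> * y\<^sup>2 * (x1\<^sup>2 - x2\<^sup>2) \<ge> - (\<rho>\<^sup>2 * (\<alpha> * \<beta> * F))" by (simp add: abs_le_iff algebra_simps)
  have t0: "2 * (p1\<^sup>2 - p2\<^sup>2) \<ge> 3 * c\<^sup>2 / 8" using p by simp
  have "Gd \<alpha> \<beta> \<gamma> p1 x1 q y r - Gd \<alpha> \<beta> \<gamma> p2 x2 q y r
     = 2 * (p1\<^sup>2 - p2\<^sup>2) + ((1 - x1\<^sup>2)\<^sup>2 - (1 - x2\<^sup>2)\<^sup>2) / r\<^sup>2 + \<alpha> * \<beta> * y\<^sup>2 * (x1\<^sup>2 - x2\<^sup>2)"
    by (simp add: Gd_def algebra_simps diff_divide_distrib)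
  also have "\<dots> \<ge> 3 * c\<^sup>2 / 8 - \<rho>\<^sup>2 * (8 / r0\<^sup>2 + \<alpha> * \<beta> * F)"
    using t0 t1' t2 by (simp add: algebra_simps)
  finally show ?thesis using rho by simp
qed



lemma Gd_diff_f:
  fixes \<alpha> \<beta> \<gamma> r r0 \<rho> \<kappa> c U :: real
  assumes prm: "\<alpha> \<ge> 0" "\<beta> \<ge> 0" "\<gamma> \<ge> 0"
    and r: "r0 > 0" "r \<ge> r0 / 2" "r \<le> 3 * r0 / 2"
    and y: "\<bar>y1\<bar> \<le> \<rho>" "\<bar>y2\<bar> \<le> \<rho>" "\<rho> \<le> 1"
    and x: "x\<^sup>2 \<le> U"
    and q: "q1\<^sup>2 \<ge> c\<^sup>2 / 4" "q2\<^sup>2 \<le> \<kappa>\<^sup>2" "\<kappa>\<^sup>2 \<le> c\<^sup>2 / 8"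
    and rho: "\<rho>\<^sup>2 * (\<alpha> * \<beta> * U + \<alpha> * \<gamma> * (9 * r0\<^sup>2 / 4)) \<le> \<alpha> * r0\<^sup>2 * c\<^sup>2 / 64"
  shows "Gd \<alpha> \<beta> \<gamma> p x q2 y2 r + \<alpha> * r0\<^sup>2 * c\<^sup>2 / 64 \<le> Gd \<alpha> \<beta> \<gamma> p x q1 y1 r"
proof -
  have U0: "U \<ge> 0" using x zero_le_power2[of x] by linarith
  have A: "y1\<^sup>2 \<le> \<rho>\<^sup>2" "y2\<^sup>2 \<le> \<rho>\<^sup>2" using y by (auto intro: sq_le_of_abs)
  have r1: "\<rho>\<^sup>2 \<le> 1" using y by (simp add: power_le_one)
  have rr: "r\<^sup>2 \<ge> r0\<^sup>2 / 4"
  proof -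
    have "(r0 / 2)\<^sup>2 \<le> r\<^sup>2" using r by (intro power_mono) auto
    thus ?thesis by (simp add: power_divide)
  qed
  have rr2: "r\<^sup>2 \<le> 9 * r0\<^sup>2 / 4"
  proof -
    have "r\<^sup>2 \<le> (3 * r0 / 2)\<^sup>2" using r by (intro power_mono) auto
    thus ?thesis by (simp add: power_divide power_mult_distrib)
  qed
  have qq: "q1\<^sup>2 - q2\<^sup>2 \<ge> c\<^sup>2 / 8" using q by simp
  have "\<alpha> * (r0\<^sup>2 / 4) * (c\<^sup>2 / 8) \<le> \<alpha> * r\<^sup>2 * (q1\<^sup>2 - q2\<^sup>2)"
    using prm rr qq by (intro mult_mono) auto
  hence t0: "\<alpha> * r\<^sup>2 * (q1\<^sup>2 - q2\<^sup>2) \<ge> \<alpha> * r0\<^sup>2 * c\<^sup>2 / 32" by simp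
  have "\<bar>y1\<^sup>2 - y2\<^sup>2\<bar> \<le> \<rho>\<^sup>2"
    using A zero_le_power2[of y1] zero_le_power2[of y2] unfolding abs_le_iff by linarith
  hence "\<bar>\<alpha> * \<beta> * x\<^sup>2 * (y1\<^sup>2 - y2\<^sup>2)\<bar> \<le> \<alpha> * \<beta> * U * \<rho>\<^sup>2"
    unfolding abs_mult using prm x U0 by (intro mult_mono) auto
  hence t1: "\<alpha> * \<beta> * x\<^sup>2 * (y1\<^sup>2 - y2\<^sup>2) \<ge> - (\<rho>\<^sup>2 * (\<alpha> * \<beta> * U))" by (simp add: abs_le_iff algebra_simps)
  have "\<bar>(y1\<^sup>2 - 1)\<^sup>2 - (y2\<^sup>2 - 1)\<^sup>2\<bar> \<le> 2 * \<rho>\<^sup>2"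
    using sq_diff_bound(2)[of "y1\<^sup>2" "\<rho>\<^sup>2" "y2\<^sup>2"] A r1 by auto
  hence "\<bar>\<alpha> * \<gamma> / 2 * r\<^sup>2 * ((y1\<^sup>2 - 1)\<^sup>2 - (y2\<^sup>2 - 1)\<^sup>2)\<bar> \<le> \<alpha> * \<gamma> / 2 * (9 * r0\<^sup>2 / 4) * (2 * \<rho>\<^sup>2)"
    unfolding abs_mult using prm rr2 by (intro mult_mono) auto
  hence "\<alpha> * \<gamma> / 2 * r\<^sup>2 * ((y1\<^sup>2 - 1)\<^sup>2 - (y2\<^sup>2 - 1)\<^sup>2) \<ge> - (\<alpha> * \<gamma> / 2 * (9 * r0\<^sup>2 / 4) * (2 * \<rho>\<^sup>2))"
    unfolding abs_le_iff by linarith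
  moreover have "\<alpha> * \<gamma> / 2 * (9 * r0\<^sup>2 / 4) * (2 * \<rho>\<^sup>2) = \<rho>\<^sup>2 * (\<alpha> * \<gamma> * (9 * r0\<^sup>2 / 4))"
    by (simp add: algebra_simps)
  ultimately have t2: "\<alpha> * \<gamma> / 2 * r\<^sup>2 * ((y1\<^sup>2 - 1)\<^sup>2 - (y2\<^sup>2 - 1)\<^sup>2) \<ge> - (\<rho>\<^sup>2 * (\<alpha> * \<gamma> * (9 * r0\<^sup>2 / 4)))"
    by linarith
  have "Gd \<alpha> \<beta> \<gamma> p x q1 y1 r - Gd \<alpha> \<beta> \<gamma> p x q2 y2 r
     = \<alpha> * r\<^sup>2 * (q1\<^sup>2 - q2\<^sup>2) + \<alpha> * \<beta> * x\<^sup>2 * (y1\<^sup>2 - y2\<^sup>2) + \<alpha> * \<gamma> / 2 * r\<^sup>2 * ((y1\<^sup>2 - 1)\<^sup>2 - (y2\<^sup>2 - 1)\<^sup>2)"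
    by (simp add: Gd_def algebra_simps)
  also have "\<dots> \<ge> \<alpha> * r0\<^sup>2 * c\<^sup>2 / 32 - \<rho>\<^sup>2 * (\<alpha> * \<beta> * U + \<alpha> * \<gamma> * (9 * r0\<^sup>2 / 4))"
    using t0 t1 t2 by (simp add: algebra_simps)
  finally show ?thesis using rho by simp
qed



lemma small_rho:
  fixes K c :: real
  assumes "K \<ge> 0" "c \<noteq> 0"
  shows "\<exists>\<rho>>0. \<rho> \<le> 1 \<and> \<rho>\<^sup>2 * K \<le> c\<^sup>2 / 9"
proof -
  define \<rho> where "\<rho> = min 1 (\<bar>c\<bar> / (3 * sqrt (K + 1)))"
  have sK: "sqrt (K + 1) > 0" using assms by simp
  have \<rho>0: "\<rho> > 0" "\<rho> \<le> 1" using assms sK by (auto simp: \<rho>_def)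
  have "\<rho>\<^sup>2 \<le> (\<bar>c\<bar> / (3 * sqrt (K + 1)))\<^sup>2"
    using \<rho>0 by (intro power_mono) (auto simp: \<rho>_def)
  also have "\<dots> = c\<^sup>2 / (9 * (K + 1))"
    using assms by (simp add: power_divide power_mult_distrib)
  finally have "\<rho>\<^sup>2 * (K + 1) \<le> c\<^sup>2 / (9 * (K + 1)) * (K + 1)"
    using assms by (intro mult_right_mono) auto
  also have "\<dots> = c\<^sup>2 / 9"
  proof -
    have "K + 1 > 0" using assms by simp
    thus ?thesis by (simp add: field_simps)
  qed
  finally have "\<rho>\<^sup>2 * K \<le> c\<^sup>2 / 9" by (simp add: algebra_simps) (smt (verit) zero_le_power2)
  thus ?thesis using \<rho>0 by blast
qed

lemma Gd_neg: "Gd \<alpha> \<beta> \<gamma> (- p) (- x) q y r = Gd \<alpha> \<beta> \<gamma> p x q y r"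
  "Gd \<alpha> \<beta> \<gamma> p x (- q) (- y) r = Gd \<alpha> \<beta> \<gamma> p x q y r"
  by (simp_all add: Gd_def)

lemma cont_sq_bound:
  assumes "\<And>x. x > 0 \<Longrightarrow> (f has_real_derivative f' x) (at x)" "0 < a"
  shows "\<exists>F. \<forall>x\<in>{a..b}. (f x)\<^sup>2 \<le> F"
proof -
  have "continuous_on {a..b} f"
    using assms by (intro continuous_at_imp_continuous_on ballI DERIV_isCont[OF assms(1)]) auto
  then obtain B where B: "\<And>x. x \<in> {a..b} \<Longrightarrow> \<bar>f x\<bar> \<le> B" using cont_bounded by blast
  show ?thesis by (rule exI[of _ "B\<^sup>2"]) (use B in \<open>auto intro: sq_le_of_abs\<close>)
qed

lemma no_corner_u:
  fixes u f u' f' :: "real \<Rightarrow> real"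
  assumes prm: "\<alpha> > 0" "\<beta> > 0" "\<gamma> \<ge> 0"
    and X: "admissible \<alpha> \<beta> \<gamma> u f"
    and minim: "\<And>v g. admissible \<alpha> \<beta> \<gamma> v g \<Longrightarrow> energy \<alpha> \<beta> \<gamma> u f \<le> energy \<alpha> \<beta> \<gamma> v g"
    and Du: "\<And>x. x > 0 \<Longrightarrow> (u has_real_derivative u' x) (at x)"
    and Cu': "\<And>x. x > 0 \<Longrightarrow> isCont u' x"
    and Df: "\<And>x. x > 0 \<Longrightarrow> (f has_real_derivative f' x) (at x)"
    and r0: "r0 > 0" "u r0 = 0" "u' r0 \<noteq> 0"
  shows False
proof -
  define c where "c = u' r0"
  have c0: "c \<noteq> 0" using r0 by (simp add: c_def)
  obtain F where F': "\<forall>x\<in>{r0/2..3*r0/2}. (f x)\<^sup>2 \<le> F"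
    using cont_sq_bound[OF Df, of "r0/2" "3*r0/2"] r0 by auto
  have F: "\<And>x. x \<in> {r0/2..3*r0/2} \<Longrightarrow> (f x)\<^sup>2 \<le> F" using F' by blast
  have "r0 \<in> {r0/2..3*r0/2}" using r0 by auto
  hence F0: "F \<ge> 0" using F[of r0] zero_le_power2[of "f r0"] by linarith
  define K where "K = 8 / r0\<^sup>2 + \<alpha> * \<beta> * F"
  have K0: "K \<ge> 0" using prm F0 r0 by (simp add: K_def)
  obtain \<rho> where \<rho>: "\<rho> > 0" "\<rho> \<le> 1" "\<rho>\<^sup>2 * K \<le> c\<^sup>2 / 9" using small_rho[OF K0 c0] by blast
  define \<kappa> where "\<kappa> = \<bar>c\<bar> / 4"
  have \<kappa>: "\<kappa> > 0" "\<kappa>\<^sup>2 \<le> c\<^sup>2 / 16" using c0 by (auto simp: \<kappa>_def power_divide)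
  have D0: "(u has_real_derivative c) (at r0)" using Du[OF r0(1)] by (simp add: c_def)
  obtain \<delta> where \<delta>: "\<delta> > 0" "\<delta> \<le> r0 / 2"
    and P': "\<forall>r. \<bar>r - r0\<bar> \<le> \<delta> \<longrightarrow> \<bar>u r\<bar> \<le> \<rho> \<and> (u' r)\<^sup>2 \<ge> c\<^sup>2 / 4"
    and S: "\<bar>(u (r0 + \<delta>) + u (r0 - \<delta>)) / (2 * \<delta>)\<bar> \<le> \<kappa>"
    using choose_delta[OF D0 DERIV_isCont[OF D0] Cu'[OF r0(1)] c_def[symmetric] c0 r0(1) r0(2) \<rho>(1) \<kappa>(1)]
    by blast
  have P: "\<And>r. \<bar>r - r0\<bar> \<le> \<delta> \<Longrightarrow> \<bar>u r\<bar> \<le> \<rho> \<and> (u' r)\<^sup>2 \<ge> c\<^sup>2 / 4" using P' by blast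
  define a where "a = r0 - \<delta>"
  define b where "b = r0 + \<delta>"
  have ab: "0 < a" "a < b" using \<delta> r0 by (auto simp: a_def b_def)
  define v where "v = flip u a b"
  have sl: "((- u b) - u a) / (b - a) = - ((u (r0 + \<delta>) + u (r0 - \<delta>)) / (2 * \<delta>))"
    by (simp add: a_def b_def minus_divide_left algebra_simps)
  have Xa: "loc_abs_cont u" "loc_abs_cont f" "energy \<alpha> \<beta> \<gamma> u f < \<infinity>"
    "(f \<longlongrightarrow> 0) (at_right 0)" "(u \<longlongrightarrow> 1) (at_right 0)" "(f \<longlongrightarrow> 1) at_top" "(u \<longlongrightarrow> 0) at_top"
    using X by (auto simp: admissible_def)
  have less: "energy \<alpha> \<beta> \<gamma> v f < energy \<alpha> \<beta> \<gamma> u f"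
  proof (rule energy_strict[where \<eta> = "c\<^sup>2 / 4"])
    show "0 \<le> \<alpha>" "0 \<le> \<beta>" "0 \<le> \<gamma>" using prm by auto
    show "energy \<alpha> \<beta> \<gamma> u f < \<infinity>" by (rule Xa)
    show "0 \<le> a" "a < b" using ab by auto
    show "c\<^sup>2 / 4 > 0" using c0 by simp
  next
    fix r :: real assume r: "r > 0" "r < a \<or> r > b"
    have df: "deriv f r = f' r" using Df[OF r(1)] by (rule DERIV_imp_deriv)
    show "Gd \<alpha> \<beta> \<gamma> (deriv v r) (v r) (deriv f r) (f r) r = Gd \<alpha> \<beta> \<gamma> (deriv u r) (u r) (deriv f r) (f r) r"
    proof (cases "r < a")
      case True
      have "deriv v r = u' r" unfolding v_def by (rule DERIV_imp_deriv[OF flip_deriv_left[of u u' r a b, OF Du[OF r(1)] True]])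
      moreover have "v r = u r" using True by (simp add: v_def flip_left)
      moreover have "deriv u r = u' r" by (rule DERIV_imp_deriv[OF Du[OF r(1)]])
      ultimately show ?thesis by simp
    next
      case False
      hence rb: "r > b" using r by auto
      have "deriv v r = - u' r" unfolding v_def by (rule DERIV_imp_deriv[OF flip_deriv_right[of u u' r b a, OF Du[OF r(1)] rb ab(2)]])
      moreover have "v r = - u r" using rb ab by (simp add: v_def flip_right)
      moreover have "deriv u r = u' r" by (rule DERIV_imp_deriv[OF Du[OF r(1)]])
      ultimately show ?thesis by (simp add: Gd_neg)
    qed
  next
    fix r :: real assume r: "a < r" "r < b"
    have rpos: "r > 0" using r ab by auto
    have rd: "\<bar>r - r0\<bar> \<le> \<delta>" using r by (auto simp: a_def b_def)
    have dv: "deriv v r = ((- u b) - u a) / (b - a)" unfolding v_def by (rule DERIV_imp_deriv[OF flip_deriv_mid[OF r]])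
    have du: "deriv u r = u' r" by (rule DERIV_imp_deriv[OF Du[OF rpos]])
    have vb: "\<bar>v r\<bar> \<le> \<rho>"
    proof -
      have "\<bar>v r\<bar> \<le> max \<bar>u a\<bar> \<bar>u b\<bar>" unfolding v_def using r ab by (intro flip_mid_bound) auto
      moreover have "\<bar>u a\<bar> \<le> \<rho>" "\<bar>u b\<bar> \<le> \<rho>" using P[of a] P[of b] \<delta> by (auto simp: a_def b_def)
      ultimately show ?thesis by simp
    qed
    have p2: "(deriv v r)\<^sup>2 \<le> \<kappa>\<^sup>2" unfolding dv sl using S \<kappa> by (simp add: sq_le_of_abs)
    show "Gd \<alpha> \<beta> \<gamma> (deriv v r) (v r) (deriv f r) (f r) r + c\<^sup>2 / 4 \<le> Gd \<alpha> \<beta> \<gamma> (deriv u r) (u r) (deriv f r) (f r) r"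
    proof -
      have h1: "0 \<le> \<alpha>" "0 \<le> \<beta>" "0 \<le> \<gamma>" using prm by auto
      have h2: "r0 > 0" "r0 / 2 \<le> r" using r0 rd \<delta> by auto
      have h3: "\<bar>u r\<bar> \<le> \<rho>" using P[OF rd] du by auto
      have h4: "\<bar>v r\<bar> \<le> \<rho>" "\<rho> \<le> 1" using vb \<rho> by auto
      have "r \<in> {r0/2..3*r0/2}" using rd \<delta> unfolding abs_le_iff by auto
      hence h5: "(f r)\<^sup>2 \<le> F" using F by blast
      have h6: "c\<^sup>2 / 4 \<le> (deriv u r)\<^sup>2" using P[OF rd] du by auto
      have h7: "(deriv v r)\<^sup>2 \<le> \<kappa>\<^sup>2" "\<kappa>\<^sup>2 \<le> c\<^sup>2 / 16" using p2 \<kappa> by auto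
      have "\<rho>\<^sup>2 * K \<ge> 0" using K0 by simp
      hence h8: "\<rho>\<^sup>2 * (8 / r0\<^sup>2 + \<alpha> * \<beta> * F) \<le> c\<^sup>2 / 8" using \<rho>(3) unfolding K_def by linarith
      show ?thesis by (rule Gd_diff_u[OF h1 h2 h3 h4 h5 h6 h7 h8])
    qed
  qed
  have "admissible \<alpha> \<beta> \<gamma> v f"
    unfolding admissible_def
  proof (intro conjI)
    show "loc_abs_cont v" unfolding v_def by (rule flip_loc_abs_cont[OF ab Du Cu'])
    show "energy \<alpha> \<beta> \<gamma> v f < \<infinity>" using less Xa(3) by simp
    show "(v \<longlongrightarrow> 1) (at_right 0)" unfolding v_def by (rule flip_lim0[OF Xa(5) ab(1)])
    have "((\<lambda>r. - u r) \<longlongrightarrow> - 0) at_top" by (intro tendsto_minus Xa(7))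
    thus "(v \<longlongrightarrow> 0) at_top" unfolding v_def using flip_limtop[OF _ ab(2)] by simp
  qed (use Xa in auto)
  from minim[OF this] less show False by simp
qed



lemma no_corner_f:
  fixes u f u' f' :: "real \<Rightarrow> real"
  assumes prm: "\<alpha> > 0" "\<beta> > 0" "\<gamma> \<ge> 0"
    and X: "admissible \<alpha> \<beta> \<gamma> u f"
    and minim: "\<And>v g. admissible \<alpha> \<beta> \<gamma> v g \<Longrightarrow> energy \<alpha> \<beta> \<gamma> u f \<le> energy \<alpha> \<beta> \<gamma> v g"
    and Du: "\<And>x. x > 0 \<Longrightarrow> (u has_real_derivative u' x) (at x)"
    and Df: "\<And>x. x > 0 \<Longrightarrow> (f has_real_derivative f' x) (at x)"
    and Cf': "\<And>x. x > 0 \<Longrightarrow> isCont f' x"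
    and r0: "r0 > 0" "f r0 = 0" "f' r0 \<noteq> 0"
  shows False
proof -
  define w where "w = (\<lambda>r. - f r)"
  define w' where "w' = (\<lambda>r. - f' r)"
  have Dw: "\<And>x. x > 0 \<Longrightarrow> (w has_real_derivative w' x) (at x)"
    unfolding w_def w'_def by (intro derivative_intros Df)
  have Cw': "\<And>x. x > 0 \<Longrightarrow> isCont w' x" unfolding w'_def by (intro continuous_intros Cf')
  define c where "c = w' r0"
  have c0: "c \<noteq> 0" using r0 by (simp add: c_def w'_def)
  obtain U where U': "\<forall>x\<in>{r0/2..3*r0/2}. (u x)\<^sup>2 \<le> U"
    using cont_sq_bound[OF Du, of "r0/2" "3*r0/2"] r0 by auto
  have U: "\<And>x. x \<in> {r0/2..3*r0/2} \<Longrightarrow> (u x)\<^sup>2 \<le> U" using U' by blast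
  have "r0 \<in> {r0/2..3*r0/2}" using r0 by auto
  hence U0: "U \<ge> 0" using U[of r0] zero_le_power2[of "u r0"] by linarith
  define K where "K = \<alpha> * \<beta> * U + \<alpha> * \<gamma> * (9 * r0\<^sup>2 / 4)"
  have K0: "K \<ge> 0" using prm U0 r0 by (simp add: K_def)
  define c' where "c' = sqrt \<alpha> * r0 * c / 8"
  have c'0: "c' \<noteq> 0" using c0 prm r0 by (simp add: c'_def)
  have c'2: "c'\<^sup>2 = \<alpha> * r0\<^sup>2 * c\<^sup>2 / 64"
    using prm by (simp add: c'_def power_mult_distrib power_divide)
  obtain \<rho> where \<rho>: "\<rho> > 0" "\<rho> \<le> 1" "\<rho>\<^sup>2 * K \<le> c'\<^sup>2 / 9" using small_rho[OF K0 c'0] by blast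
  define \<kappa> where "\<kappa> = \<bar>c\<bar> / 4"
  have \<kappa>: "\<kappa> > 0" "\<kappa>\<^sup>2 \<le> c\<^sup>2 / 8" using c0 by (auto simp: \<kappa>_def power_divide)
  have w0: "w r0 = 0" using r0 by (simp add: w_def)
  have D0: "(w has_real_derivative c) (at r0)" using Dw[OF r0(1)] by (simp add: c_def)
  obtain \<delta> where \<delta>: "\<delta> > 0" "\<delta> \<le> r0 / 2"
    and P': "\<forall>r. \<bar>r - r0\<bar> \<le> \<delta> \<longrightarrow> \<bar>w r\<bar> \<le> \<rho> \<and> (w' r)\<^sup>2 \<ge> c\<^sup>2 / 4"
    and S: "\<bar>(w (r0 + \<delta>) + w (r0 - \<delta>)) / (2 * \<delta>)\<bar> \<le> \<kappa>"
    using choose_delta[OF D0 DERIV_isCont[OF D0] Cw'[OF r0(1)] c_def[symmetric] c0 r0(1) w0 \<rho>(1) \<kappa>(1)]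
    by blast
  have P: "\<And>r. \<bar>r - r0\<bar> \<le> \<delta> \<Longrightarrow> \<bar>w r\<bar> \<le> \<rho> \<and> (w' r)\<^sup>2 \<ge> c\<^sup>2 / 4" using P' by blast
  define a where "a = r0 - \<delta>"
  define b where "b = r0 + \<delta>"
  have ab: "0 < a" "a < b" using \<delta> r0 by (auto simp: a_def b_def)
  define g where "g = flip w a b"
  have sl: "((- w b) - w a) / (b - a) = - ((w (r0 + \<delta>) + w (r0 - \<delta>)) / (2 * \<delta>))"
    by (simp add: a_def b_def minus_divide_left algebra_simps)
  have Xa: "loc_abs_cont u" "loc_abs_cont f" "energy \<alpha> \<beta> \<gamma> u f < \<infinity>"
    "(f \<longlongrightarrow> 0) (at_right 0)" "(u \<longlongrightarrow> 1) (at_right 0)" "(f \<longlongrightarrow> 1) at_top" "(u \<longlongrightarrow> 0) at_top"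
    using X by (auto simp: admissible_def)
  have less: "energy \<alpha> \<beta> \<gamma> u g < energy \<alpha> \<beta> \<gamma> u f"
  proof (rule energy_strict[where \<eta> = "\<alpha> * r0\<^sup>2 * c\<^sup>2 / 64"])
    show "0 \<le> \<alpha>" "0 \<le> \<beta>" "0 \<le> \<gamma>" using prm by auto
    show "energy \<alpha> \<beta> \<gamma> u f < \<infinity>" by (rule Xa)
    show "0 \<le> a" "a < b" using ab by auto
    show "\<alpha> * r0\<^sup>2 * c\<^sup>2 / 64 > 0" using c0 prm r0 by simp
  next
    fix r :: real assume r: "r > 0" "r < a \<or> r > b"
    have du: "deriv u r = u' r" using Du[OF r(1)] by (rule DERIV_imp_deriv)
    have df: "deriv f r = f' r" using Df[OF r(1)] by (rule DERIV_imp_deriv)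
    show "Gd \<alpha> \<beta> \<gamma> (deriv u r) (u r) (deriv g r) (g r) r = Gd \<alpha> \<beta> \<gamma> (deriv u r) (u r) (deriv f r) (f r) r"
    proof (cases "r < a")
      case True
      have "deriv g r = w' r" unfolding g_def by (rule DERIV_imp_deriv[OF flip_deriv_left[of w w' r a b, OF Dw[OF r(1)] True]])
      moreover have "g r = w r" using True by (simp add: g_def flip_left)
      ultimately show ?thesis using df by (simp add: w_def w'_def Gd_neg)
    next
      case False
      hence rb: "r > b" using r by auto
      have "deriv g r = - w' r" unfolding g_def by (rule DERIV_imp_deriv[OF flip_deriv_right[of w w' r b a, OF Dw[OF r(1)] rb ab(2)]])
      moreover have "g r = - w r" using rb ab by (simp add: g_def flip_right)
      ultimately show ?thesis using df by (simp add: w_def w'_def)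
    qed
  next
    fix r :: real assume r: "a < r" "r < b"
    have rpos: "r > 0" using r ab by auto
    have rd: "\<bar>r - r0\<bar> \<le> \<delta>" using r by (auto simp: a_def b_def)
    have dg: "deriv g r = ((- w b) - w a) / (b - a)" unfolding g_def by (rule DERIV_imp_deriv[OF flip_deriv_mid[OF r]])
    have df: "deriv f r = f' r" by (rule DERIV_imp_deriv[OF Df[OF rpos]])
    have gb: "\<bar>g r\<bar> \<le> \<rho>"
    proof -
      have "\<bar>g r\<bar> \<le> max \<bar>w a\<bar> \<bar>w b\<bar>" unfolding g_def using r ab by (intro flip_mid_bound) auto
      moreover have "\<bar>w a\<bar> \<le> \<rho>" "\<bar>w b\<bar> \<le> \<rho>" using P[of a] P[of b] \<delta> by (auto simp: a_def b_def)
      ultimately show ?thesis by simp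
    qed
    have p2: "(deriv g r)\<^sup>2 \<le> \<kappa>\<^sup>2" unfolding dg sl using S \<kappa> by (simp add: sq_le_of_abs)
    have h1: "0 \<le> \<alpha>" "0 \<le> \<beta>" "0 \<le> \<gamma>" using prm by auto
    have h2: "r0 > 0" "r0 / 2 \<le> r" "r \<le> 3 * r0 / 2" using r0 rd \<delta> unfolding abs_le_iff by auto
    have h3: "\<bar>f r\<bar> \<le> \<rho>" using P[OF rd] by (auto simp: w_def)
    have h4: "\<bar>g r\<bar> \<le> \<rho>" "\<rho> \<le> 1" using gb \<rho> by auto
    have "r \<in> {r0/2..3*r0/2}" using h2 by auto
    hence h5: "(u r)\<^sup>2 \<le> U" using U by blast
    have h6: "c\<^sup>2 / 4 \<le> (deriv f r)\<^sup>2" using P[OF rd] df by (auto simp: w'_def)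
    have h7: "(deriv g r)\<^sup>2 \<le> \<kappa>\<^sup>2" "\<kappa>\<^sup>2 \<le> c\<^sup>2 / 8" using p2 \<kappa> by auto
    have "\<rho>\<^sup>2 * K \<ge> 0" using K0 by simp
    hence h8: "\<rho>\<^sup>2 * (\<alpha> * \<beta> * U + \<alpha> * \<gamma> * (9 * r0\<^sup>2 / 4)) \<le> \<alpha> * r0\<^sup>2 * c\<^sup>2 / 64"
      using \<rho>(3) c'2 unfolding K_def by linarith
    show "Gd \<alpha> \<beta> \<gamma> (deriv u r) (u r) (deriv g r) (g r) r + \<alpha> * r0\<^sup>2 * c\<^sup>2 / 64 \<le> Gd \<alpha> \<beta> \<gamma> (deriv u r) (u r) (deriv f r) (f r) r"
      by (rule Gd_diff_f[OF h1 h2 h3 h4 h5 h6 h7 h8])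
  qed
  have "admissible \<alpha> \<beta> \<gamma> u g"
    unfolding admissible_def
  proof (intro conjI)
    show "loc_abs_cont g" unfolding g_def by (rule flip_loc_abs_cont[OF ab Dw Cw'])
    show "energy \<alpha> \<beta> \<gamma> u g < \<infinity>" using less Xa(3) by simp
    have "(w \<longlongrightarrow> - 0) (at_right 0)" unfolding w_def by (intro tendsto_minus Xa(4))
    thus "(g \<longlongrightarrow> 0) (at_right 0)" unfolding g_def using flip_lim0[OF _ ab(1)] by simp
    have "((\<lambda>r. - w r) \<longlongrightarrow> 1) at_top" unfolding w_def using Xa(6) by simp
    thus "(g \<longlongrightarrow> 1) at_top" unfolding g_def using flip_limtop[OF _ ab(2)] by simp
  qed (use Xa in auto)
  from minim[OF this] less show False by simp
qed



lemma part1: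
  fixes u f u' f' u'' f'' :: "real \<Rightarrow> real"
  assumes prm: "\<alpha> > 0" "\<beta> > 0" "\<gamma> \<ge> 0"
    and X: "admissible \<alpha> \<beta> \<gamma> u f"
    and minim: "\<And>v g. admissible \<alpha> \<beta> \<gamma> v g \<Longrightarrow> energy \<alpha> \<beta> \<gamma> u f \<le> energy \<alpha> \<beta> \<gamma> v g"
    and Du: "\<And>x. x > 0 \<Longrightarrow> (u has_real_derivative u' x) (at x)"
    and Du2: "\<And>x. x > 0 \<Longrightarrow> (u' has_real_derivative u'' x) (at x)"
    and Eu: "\<And>x. x > 0 \<Longrightarrow> u'' x = \<alpha> * \<beta> / 2 * (f x)\<^sup>2 * u x + u x * ((u x)\<^sup>2 - 1) / x\<^sup>2"
    and Df: "\<And>x. x > 0 \<Longrightarrow> (f has_real_derivative f' x) (at x)"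
    and Df2: "\<And>x. x > 0 \<Longrightarrow> (f' has_real_derivative f'' x) (at x)"
    and Ef: "\<And>x. x > 0 \<Longrightarrow> f'' x = - 2 / x * f' x + \<beta> / x\<^sup>2 * f x * (u x)\<^sup>2 + \<gamma> * f x * ((f x)\<^sup>2 - 1)"
  shows "\<forall>r>0. 0 < u r \<and> u r < 1 \<and> 0 < f r \<and> f r < 1"
proof -
  have Xa: "(f \<longlongrightarrow> 0) (at_right 0)" "(u \<longlongrightarrow> 1) (at_right 0)" "(f \<longlongrightarrow> 1) at_top" "(u \<longlongrightarrow> 0) at_top"
    using X by (auto simp: admissible_def)
  have Cu': "\<And>x. x > 0 \<Longrightarrow> isCont u' x" using Du2 by (rule DERIV_isCont)
  have Cf': "\<And>x. x > 0 \<Longrightarrow> isCont f' x" using Df2 by (rule DERIV_isCont)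
  have cu: "continuous_on {a..b} u" if "a > 0" for a b
    using that by (intro continuous_at_imp_continuous_on ballI DERIV_isCont[OF Du]) auto
  have cf: "continuous_on {a..b} f" if "a > 0" for a b
    using that by (intro continuous_at_imp_continuous_on ballI DERIV_isCont[OF Df]) auto
  have ev0: "eventually (\<lambda>r. u r > 1/2) (at_right 0)"
    using Xa(2) by (rule order_tendstoD) simp
  then obtain e0 where e0: "e0 > 0" "\<And>r. r > 0 \<Longrightarrow> r < e0 \<Longrightarrow> u r > 1/2"
    by (auto simp: eventually_at_right_field)
  have upos: "u x > 0" if x: "x > 0" for x
  proof (rule ccontr)
    assume "\<not> u x > 0"
    hence ux: "u x \<le> 0" by simp
    define y where "y = min (e0 / 2) (x / 2)"
    have y: "y > 0" "y \<le> x" "u y > 1/2" using e0 x by (auto simp: y_def intro!: e0(2))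
    obtain r0 where r0: "y \<le> r0" "r0 \<le> x" "u r0 = 0"
      using IVT2'[of u x 0 y, OF ux _ y(2) cu[OF y(1)]] y by auto
    have r0p: "r0 > 0" using r0 y by auto
    show False
    proof (cases "u' r0 = 0")
      case False
      thus False using no_corner_u[OF prm X minim Du Cu' Df r0p r0(3)] by blast
    next
      case True
      define q where "q = (\<lambda>x. \<alpha> * \<beta> / 2 * (f x)\<^sup>2 + ((u x)\<^sup>2 - 1) / x\<^sup>2)"
      define z where "z = min (e0 / 2) (r0 / 2)"
      have z: "z > 0" "z \<le> r0" "u z > 1/2" using e0 r0p by (auto simp: z_def intro!: e0(2))
      have "u z = 0"
      proof (rule ode_unique_zero[of z r0 u u' "\<lambda>_. 0" q r0])
        fix t assume t: "t \<in> {z..r0}"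
        hence tp: "t > 0" using z by auto
        show "(u has_real_derivative u' t) (at t)" by (rule Du[OF tp])
        show "(u' has_real_derivative (0 * u' t + q t * u t)) (at t)"
          using Du2[OF tp] Eu[OF tp] by (simp add: q_def algebra_simps diff_divide_distrib)
      next
        show "continuous_on {z..r0} (\<lambda>_. 0::real)" by simp
        show "continuous_on {z..r0} q" unfolding q_def
          using z cu[OF z(1)] cf[OF z(1)] by (intro continuous_intros) auto
      qed (use z r0 True in auto)
      with z show False by simp
    qed
  qed
  have ev1: "eventually (\<lambda>r. f r > 1/2) at_top"
    using Xa(3) by (rule order_tendstoD) simp
  then obtain R1 where R1: "\<And>r. r \<ge> R1 \<Longrightarrow> f r > 1/2"
    by (auto simp: eventually_at_top_linorder)
  have fpos: "f x > 0" if x: "x > 0" for x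
  proof (rule ccontr)
    assume "\<not> f x > 0"
    hence fx: "f x \<le> 0" by simp
    define y where "y = max R1 (x + 1)"
    have y: "y \<ge> x" "f y > 1/2" using R1[of y] by (auto simp: y_def)
    obtain r0 where r0: "x \<le> r0" "r0 \<le> y" "f r0 = 0"
      using IVT'[of f x 0 y, OF fx _ y(1) cf[OF x]] y by auto
    have r0p: "r0 > 0" using r0 x by auto
    show False
    proof (cases "f' r0 = 0")
      case False
      thus False using no_corner_f[OF prm X minim Du Df Cf' r0p r0(3)] by blast
    next
      case True
      define p where "p = (\<lambda>x::real. - 2 / x)"
      define q where "q = (\<lambda>x. \<beta> / x\<^sup>2 * (u x)\<^sup>2 + \<gamma> * ((f x)\<^sup>2 - 1))"
      define z where "z = max R1 (r0 + 1)"
      have z: "z \<ge> r0" "f z > 1/2" using R1[of z] by (auto simp: z_def)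
      have "f z = 0"
      proof (rule ode_unique_zero[of r0 z f f' p q r0])
        fix t assume t: "t \<in> {r0..z}"
        hence tp: "t > 0" using r0p by auto
        show "(f has_real_derivative f' t) (at t)" by (rule Df[OF tp])
        show "(f' has_real_derivative (p t * f' t + q t * f t)) (at t)"
          using Df2[OF tp] Ef[OF tp] by (simp add: p_def q_def algebra_simps)
      next
        show "continuous_on {r0..z} p" unfolding p_def
          using r0p by (intro continuous_intros) auto
        show "continuous_on {r0..z} q" unfolding q_def
          using r0p cu[OF r0p] cf[OF r0p] by (intro continuous_intros) auto
      qed (use z r0 True in auto)
      with z show False by simp
    qed
  qed
  have ult: "u x < 1" if x: "x > 0" for x
  proof -
    have "u x - 1 < 0"
    proof (rule maxp_top[where d = "\<lambda>r. u r - 1" and d' = u' and d'' = u'' and a = 0 and La = 0 and Lb = "-1"])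
      fix r :: real assume r: "r > 0"
      show "((\<lambda>r. u r - 1) has_real_derivative u' r) (at r)" using Du[OF r] by (auto intro!: derivative_eq_intros)
      show "(u' has_real_derivative u'' r) (at r)" by (rule Du2[OF r])
      assume h: "u r - 1 \<ge> 0" "u' r = 0"
      have "u r * ((u r)\<^sup>2 - 1) / r\<^sup>2 \<ge> 0"
      proof -
        have "(u r)\<^sup>2 \<ge> 1" using h by (simp add: one_le_power)
        thus ?thesis using h by (intro divide_nonneg_nonneg mult_nonneg_nonneg) auto
      qed
      moreover have "\<alpha> * \<beta> / 2 * (f r)\<^sup>2 * u r > 0" using prm fpos[OF r] h by simp
      ultimately show "u'' r > 0" using Eu[OF r] by simp
    next
      show "((\<lambda>r. u r - 1) \<longlongrightarrow> 0) (at_right 0)" using tendsto_diff[OF Xa(2) tendsto_const[of 1]] by simp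
      show "((\<lambda>r. u r - 1) \<longlongrightarrow> -1) at_top" using tendsto_diff[OF Xa(4) tendsto_const[of 1]] by simp
    qed (use x in auto)
    thus ?thesis by simp
  qed
  have flt: "f x < 1" if x: "x > 0" for x
  proof -
    have "f x - 1 < 0"
    proof (rule maxp_top[where d = "\<lambda>r. f r - 1" and d' = f' and d'' = f'' and a = 0 and La = "-1" and Lb = 0])
      fix r :: real assume r: "r > 0"
      show "((\<lambda>r. f r - 1) has_real_derivative f' r) (at r)" using Df[OF r] by (auto intro!: derivative_eq_intros)
      show "(f' has_real_derivative f'' r) (at r)" by (rule Df2[OF r])
      assume h: "f r - 1 \<ge> 0" "f' r = 0"
      have "\<gamma> * f r * ((f r)\<^sup>2 - 1) \<ge> 0"
      proof -
        have "(f r)\<^sup>2 \<ge> 1" using h by (simp add: one_le_power)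
        thus ?thesis using h prm by (intro mult_nonneg_nonneg) auto
      qed
      moreover have "\<beta> / r\<^sup>2 * f r * (u r)\<^sup>2 > 0" using prm fpos[OF r] upos[OF r] r by simp
      ultimately show "f'' r > 0" using Ef[OF r] h by simp
    next
      show "((\<lambda>r. f r - 1) \<longlongrightarrow> -1) (at_right 0)" using tendsto_diff[OF Xa(1) tendsto_const[of 1]] by simp
      show "((\<lambda>r. f r - 1) \<longlongrightarrow> 0) at_top" using tendsto_diff[OF Xa(3) tendsto_const[of 1]] by simp
    qed (use x in auto)
    thus ?thesis by simp
  qed
  show ?thesis using upos fpos ult flt by auto
qed



lemma cont_right: "isCont (d :: real \<Rightarrow> real) x \<Longrightarrow> (d \<longlongrightarrow> d x) (at_right x)"
  using filterlim_at_split[of d "nhds (d x)" x] by (simp add: isCont_def)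

lemma cont_left: "isCont (d :: real \<Rightarrow> real) x \<Longrightarrow> (d \<longlongrightarrow> d x) (at_left x)"
  using filterlim_at_split[of d "nhds (d x)" x] by (simp add: isCont_def)

lemma exp_neg_tendsto: "k > 0 \<Longrightarrow> ((\<lambda>r::real. C * exp (- k * r)) \<longlongrightarrow> 0) at_top"
  by real_asymp

lemma u_decay:
  fixes u f u' u'' :: "real \<Rightarrow> real"
  assumes prm: "\<alpha> > 0" "\<beta> > 0"
    and Du: "\<And>x. x > 0 \<Longrightarrow> (u has_real_derivative u' x) (at x)"
    and Du2: "\<And>x. x > 0 \<Longrightarrow> (u' has_real_derivative u'' x) (at x)"
    and Eu: "\<And>x. x > 0 \<Longrightarrow> u'' x = \<alpha> * \<beta> / 2 * (f x)\<^sup>2 * u x + u x * ((u x)\<^sup>2 - 1) / x\<^sup>2"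
    and upos: "\<And>x. x > 0 \<Longrightarrow> u x > 0"
    and flim: "(f \<longlongrightarrow> 1) at_top" and ulim: "(u \<longlongrightarrow> 0) at_top"
    and k: "k > 0" "k\<^sup>2 < \<alpha> * \<beta> / 2"
  shows "\<exists>C R. R > 0 \<and> (\<forall>r>R. u r \<le> C * exp (- k * r))"
proof -
  have "((\<lambda>r. \<alpha> * \<beta> / 2 * (f r)\<^sup>2 - 1 / r\<^sup>2) \<longlongrightarrow> \<alpha> * \<beta> / 2 * 1\<^sup>2 - 0) at_top"
    by (intro tendsto_intros flim) real_asymp
  hence "eventually (\<lambda>r. \<alpha> * \<beta> / 2 * (f r)\<^sup>2 - 1 / r\<^sup>2 > k\<^sup>2) at_top"
    using k by (intro order_tendstoD(1)) auto
  then obtain R0 where R0: "\<And>r. r \<ge> R0 \<Longrightarrow> \<alpha> * \<beta> / 2 * (f r)\<^sup>2 - 1 / r\<^sup>2 > k\<^sup>2"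
    by (auto simp: eventually_at_top_linorder)
  define R where "R = max R0 1"
  have R: "R > 0" "R \<ge> R0" by (auto simp: R_def)
  define C where "C = u R * exp (k * R) + 1"
  define d where "d = (\<lambda>r. u r - C * exp (- k * r))"
  have dR: "d R < 0"
  proof -
    have "C * exp (- k * R) = u R + exp (- k * R)"
      by (simp add: C_def algebra_simps exp_minus_inverse)
    thus ?thesis by (simp add: d_def)
  qed
  have "\<forall>r>R. d r < 0"
  proof (intro allI impI)
    fix x assume x: "x > R"
    show "d x < 0"
    proof (rule maxp_top[where d = d and d' = "\<lambda>r. u' r + C * k * exp (- k * r)"
          and d'' = "\<lambda>r. u'' r - C * k\<^sup>2 * exp (- k * r)" and a = R and La = "d R" and Lb = 0])
      fix r assume r: "r > R"
      hence rp: "r > 0" using R by simp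
      show "(d has_real_derivative u' r + C * k * exp (- k * r)) (at r)"
        unfolding d_def by (rule derivative_eq_intros Du[OF rp] refl | simp)+
      show "((\<lambda>r. u' r + C * k * exp (- k * r)) has_real_derivative u'' r - C * k\<^sup>2 * exp (- k * r)) (at r)"
        by (rule derivative_eq_intros Du2[OF rp] refl | simp add: power2_eq_square)+
      assume h: "d r \<ge> 0" "u' r + C * k * exp (- k * r) = 0"
      define Q where "Q = \<alpha> * \<beta> / 2 * (f r)\<^sup>2 + ((u r)\<^sup>2 - 1) / r\<^sup>2"
      have u'': "u'' r = Q * u r" using Eu[OF rp] by (simp add: Q_def algebra_simps diff_divide_distrib)
      have "Q \<ge> \<alpha> * \<beta> / 2 * (f r)\<^sup>2 - 1 / r\<^sup>2"
        unfolding Q_def by (simp add: diff_divide_distrib)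
      hence Qk: "Q > k\<^sup>2" using R0[of r] r R by simp
      have "Q * u r > k\<^sup>2 * u r" using Qk upos[OF rp] by simp
      moreover have "k\<^sup>2 * u r \<ge> k\<^sup>2 * (C * exp (- k * r))" using h(1) by (intro mult_left_mono) (auto simp: d_def)
      ultimately show "u'' r - C * k\<^sup>2 * exp (- k * r) > 0" using u'' by (simp add: algebra_simps)
    next
      show "(d \<longlongrightarrow> d R) (at_right R)"
        using Du[OF R(1)] unfolding d_def by (intro cont_right) (intro continuous_intros DERIV_isCont[OF Du[OF R(1)]])
      show "(d \<longlongrightarrow> 0) at_top"
        unfolding d_def using tendsto_diff[OF ulim exp_neg_tendsto[OF k(1), of C]] by simp
    qed (use dR x in auto)
  qed
  thus ?thesis using R by (intro exI[of _ C] exI[of _ R]) (auto simp: d_def)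
qed



lemma u_sq_bound:
  fixes u C k r :: real
  assumes "u > 0" "u \<le> C * exp (- k * r)"
  shows "u\<^sup>2 \<le> C\<^sup>2 * exp (- (2 * k) * r)"
proof -
  have "u\<^sup>2 \<le> (C * exp (- k * r))\<^sup>2" using assms by (intro power_mono) auto
  also have "\<dots> = C\<^sup>2 * exp (- (2 * k) * r)"
    by (simp add: power_mult_distrib power2_eq_square exp_add[symmetric] algebra_simps)
  finally show ?thesis .
qed

lemma f_decay:
  fixes u f f' f'' :: "real \<Rightarrow> real"
  assumes prm: "\<alpha> > 0" "\<beta> > 0" "\<gamma> > 0"
    and Df: "\<And>x. x > 0 \<Longrightarrow> (f has_real_derivative f' x) (at x)"
    and Df2: "\<And>x. x > 0 \<Longrightarrow> (f' has_real_derivative f'' x) (at x)"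
    and Ef: "\<And>x. x > 0 \<Longrightarrow> f'' x = - 2 / x * f' x + \<beta> / x\<^sup>2 * f x * (u x)\<^sup>2 + \<gamma> * f x * ((f x)\<^sup>2 - 1)"
    and bnd: "\<And>x. x > 0 \<Longrightarrow> 0 < u x \<and> 0 < f x \<and> f x < 1"
    and flim: "(f \<longlongrightarrow> 1) at_top"
    and udec: "\<And>k. k > 0 \<Longrightarrow> k\<^sup>2 < \<alpha> * \<beta> / 2 \<Longrightarrow> \<exists>C R. R > 0 \<and> (\<forall>r>R. u r \<le> C * exp (- k * r))"
    and m: "m > 0" "m\<^sup>2 < 2 * \<gamma>" "m\<^sup>2 < 2 * (\<alpha> * \<beta>)"
  shows "\<exists>C R. R > 0 \<and> (\<forall>r>R. 1 - f r \<le> C * exp (- m * r))"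
proof -
  have k: "m / 2 > 0" "(m / 2)\<^sup>2 < \<alpha> * \<beta> / 2" using m by (auto simp: power_divide)
  obtain C1 R1 where R1: "R1 > 0" and C1: "\<And>r. r > R1 \<Longrightarrow> u r \<le> C1 * exp (- (m / 2) * r)"
    using udec[OF k] by blast
  define \<theta> where "\<theta> = 2 * \<gamma> - m\<^sup>2"
  have \<theta>: "\<theta> > 0" using m by (simp add: \<theta>_def)
  have "((\<lambda>r. \<gamma> * f r * (1 + f r)) \<longlongrightarrow> \<gamma> * 1 * (1 + 1)) at_top"
    by (intro tendsto_intros flim)
  moreover have "m\<^sup>2 + \<theta> / 2 < \<gamma> * 1 * (1 + 1)" unfolding \<theta>_def using m(2) by (simp add: field_simps)
  ultimately have "eventually (\<lambda>r. \<gamma> * f r * (1 + f r) > m\<^sup>2 + \<theta> / 2) at_top"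
    by (rule order_tendstoD(1))
  then obtain R2 where R2: "\<And>r. r \<ge> R2 \<Longrightarrow> \<gamma> * f r * (1 + f r) > m\<^sup>2 + \<theta> / 2"
    by (auto simp: eventually_at_top_linorder)
  define R where "R = max (max R1 R2) 1"
  have R: "R \<ge> R1" "R \<ge> R2" "R \<ge> 1" "R > 0" by (auto simp: R_def)
  define C where "C = 2 * \<beta> * C1\<^sup>2 / \<theta> + exp (m * R) + 1"
  have C\<theta>: "\<theta> / 2 * C > \<beta> * C1\<^sup>2"
  proof -
    have "\<theta> / 2 * C = \<beta> * C1\<^sup>2 + \<theta> / 2 * (exp (m * R) + 1)" using \<theta> by (simp add: C_def field_simps)
    moreover have "\<theta> / 2 * (exp (m * R) + 1) > 0" using \<theta> by (intro mult_pos_pos) (auto simp: add_pos_pos)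
    ultimately show ?thesis by linarith
  qed
  define d where "d = (\<lambda>r. (1 - f r) - C * exp (- m * r))"
  have dR: "d R < 0"
  proof -
    have "C * exp (- m * R) \<ge> exp (m * R) * exp (- m * R)"
      using \<theta> prm by (intro mult_right_mono) (auto simp: C_def)
    hence "C * exp (- m * R) \<ge> 1" by (simp add: exp_minus_inverse)
    thus ?thesis using bnd[OF R(4)] by (simp add: d_def)
  qed
  have "\<forall>r>R. d r < 0"
  proof (intro allI impI)
    fix x assume x: "x > R"
    show "d x < 0"
    proof (rule maxp_top[where d = d and d' = "\<lambda>r. - f' r + C * m * exp (- m * r)"
          and d'' = "\<lambda>r. - f'' r - C * m\<^sup>2 * exp (- m * r)" and a = R and La = "d R" and Lb = 0])
      fix r assume r: "r > R"
      hence rp: "r > 0" using R by simp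
      show "(d has_real_derivative - f' r + C * m * exp (- m * r)) (at r)"
        unfolding d_def by (rule derivative_eq_intros Df[OF rp] refl | simp)+
      show "((\<lambda>r. - f' r + C * m * exp (- m * r)) has_real_derivative - f'' r - C * m\<^sup>2 * exp (- m * r)) (at r)"
        by (rule derivative_eq_intros Df2[OF rp] refl | simp add: power2_eq_square)+
      assume h: "d r \<ge> 0" "- f' r + C * m * exp (- m * r) = 0"
      define E where "E = exp (- m * r)"
      define z where "z = C * E"
      have E0: "E > 0" by (simp add: E_def)
      have "2 * \<beta> * C1\<^sup>2 / \<theta> \<ge> 0" using prm \<theta> by simp
      hence C0: "C > 0" using exp_gt_zero[of "m * R"] unfolding C_def by linarith
      have z0: "z > 0" using E0 C0 by (simp add: z_def)
      have f'r: "f' r = m * z" using h(2) by (simp add: z_def E_def algebra_simps)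
      have wz: "1 - f r \<ge> z" using h(1) by (simp add: d_def z_def E_def)
      obtain fr: "0 < f r" "f r < 1" "0 < u r" using bnd[OF rp] by auto
      have mf: "- f'' r = 2 * m * z / r - \<beta> * f r * (u r)\<^sup>2 / r\<^sup>2 + \<gamma> * f r * (1 + f r) * (1 - f r)"
        using Ef[OF rp] f'r by (simp add: algebra_simps power2_eq_square)
      have t1: "2 * m * z / r \<ge> 0" using m z0 rp by simp
      have "\<gamma> * f r * (1 + f r) * (1 - f r) \<ge> \<gamma> * f r * (1 + f r) * z"
        using wz prm fr by (intro mult_left_mono) auto
      moreover have "\<gamma> * f r * (1 + f r) * z \<ge> (m\<^sup>2 + \<theta> / 2) * z"
        using R2[of r] r R z0 by (intro mult_right_mono) auto
      ultimately have t2: "\<gamma> * f r * (1 + f r) * (1 - f r) \<ge> (m\<^sup>2 + \<theta> / 2) * z" by linarith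
      have u2: "(u r)\<^sup>2 \<le> C1\<^sup>2 * E"
        using u_sq_bound[OF fr(3) C1[of r]] r R by (simp add: E_def)
      have "\<beta> * f r * (u r)\<^sup>2 / r\<^sup>2 \<le> \<beta> * f r * (u r)\<^sup>2"
      proof -
        have "r\<^sup>2 \<ge> 1" using r R by (simp add: one_le_power)
        moreover have "\<beta> * f r * (u r)\<^sup>2 \<ge> 0" using prm fr by simp
        ultimately have "\<beta> * f r * (u r)\<^sup>2 / r\<^sup>2 \<le> \<beta> * f r * (u r)\<^sup>2 / 1"
          by (intro divide_left_mono) auto
        thus ?thesis by simp
      qed
      also have "\<dots> \<le> \<beta> * 1 * (C1\<^sup>2 * E)"
        using prm fr u2 by (intro mult_mono) auto
      finally have t3: "\<beta> * f r * (u r)\<^sup>2 / r\<^sup>2 \<le> \<beta> * C1\<^sup>2 * E" by simp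
      have "- f'' r - C * m\<^sup>2 * exp (- m * r) \<ge> \<theta> / 2 * z - \<beta> * C1\<^sup>2 * E"
        using mf t1 t2 t3 by (simp add: z_def E_def algebra_simps)
      moreover have "\<theta> / 2 * z - \<beta> * C1\<^sup>2 * E = (\<theta> / 2 * C - \<beta> * C1\<^sup>2) * E" by (simp add: z_def algebra_simps)
      moreover have "(\<theta> / 2 * C - \<beta> * C1\<^sup>2) * E > 0" using C\<theta> E0 by simp
      ultimately show "- f'' r - C * m\<^sup>2 * exp (- m * r) > 0" by linarith
    next
      show "(d \<longlongrightarrow> d R) (at_right R)"
        unfolding d_def by (intro cont_right continuous_intros DERIV_isCont[OF Df[OF R(4)]])
      show "(d \<longlongrightarrow> 0) at_top"
        unfolding d_def using tendsto_diff[OF tendsto_diff[OF tendsto_const[of 1] flim] exp_neg_tendsto[OF m(1), of C]] by simp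
    qed (use dR x in auto)
  qed
  thus ?thesis using R by (intro exI[of _ C] exI[of _ R]) (auto simp: d_def)
qed



lemma inv_tendsto: "((\<lambda>r::real. M / r) \<longlongrightarrow> 0) at_top"
  by real_asymp

lemma f_decay0:
  fixes u f f' f'' :: "real \<Rightarrow> real"
  assumes prm: "\<alpha> > 0" "\<beta> > 0"
    and Df: "\<And>x. x > 0 \<Longrightarrow> (f has_real_derivative f' x) (at x)"
    and Df2: "\<And>x. x > 0 \<Longrightarrow> (f' has_real_derivative f'' x) (at x)"
    and Ef: "\<And>x. x > 0 \<Longrightarrow> f'' x = - 2 / x * f' x + \<beta> / x\<^sup>2 * f x * (u x)\<^sup>2"
    and bnd: "\<And>x. x > 0 \<Longrightarrow> 0 < u x \<and> 0 < f x \<and> f x < 1"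
    and flim: "(f \<longlongrightarrow> 1) at_top"
    and udec: "\<And>k. k > 0 \<Longrightarrow> k\<^sup>2 < \<alpha> * \<beta> / 2 \<Longrightarrow> \<exists>C R. R > 0 \<and> (\<forall>r>R. u r \<le> C * exp (- k * r))"
  shows "\<exists>M R. R > 0 \<and> (\<forall>r>R. 1 - f r \<le> M / r)"
proof -
  define k where "k = sqrt (\<alpha> * \<beta> / 2) / 2"
  have k: "k > 0" "k\<^sup>2 < \<alpha> * \<beta> / 2" using prm by (auto simp: k_def power_divide)
  obtain C1 R1 where R1: "R1 > 0" and C1: "\<And>r. r > R1 \<Longrightarrow> u r \<le> C1 * exp (- k * r)"
    using udec[OF k] by blast
  define R where "R = R1 + 1"
  have R: "R > R1" "R > 0" using R1 by (auto simp: R_def)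
  define P where "P = (\<lambda>r. r\<^sup>2 * f' r)"
  define B where "B = \<beta> * C1\<^sup>2 / (2 * k)"
  define Q where "Q = (\<lambda>r. P r + B * exp (- (2 * k) * r))"
  have DP: "(P has_real_derivative \<beta> * f r * (u r)\<^sup>2) (at r)" if r: "r > 0" for r
  proof -
    have "(P has_real_derivative 2 * r * f' r + r\<^sup>2 * f'' r) (at r)"
      unfolding P_def by (rule derivative_eq_intros Df2[OF r] refl | simp)+
    moreover have "2 * r * f' r + r\<^sup>2 * f'' r = \<beta> * f r * (u r)\<^sup>2"
      using Ef[OF r] r by (simp add: field_simps power2_eq_square)
    ultimately show ?thesis by simp
  qed
  have ub: "\<beta> * f r * (u r)\<^sup>2 \<le> \<beta> * C1\<^sup>2 * exp (- (2 * k) * r)" if r: "r > R1" for r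
  proof -
    have rp: "r > 0" using r R1 by simp
    have u2: "(u r)\<^sup>2 \<le> C1\<^sup>2 * exp (- (2 * k) * r)"
      using u_sq_bound[OF _ C1[OF r]] bnd[OF rp] by auto
    have "\<beta> * f r * (u r)\<^sup>2 \<le> \<beta> * 1 * (C1\<^sup>2 * exp (- (2 * k) * r))"
      using prm bnd[OF rp] u2 by (intro mult_mono) auto
    thus ?thesis by simp
  qed
  have Pb: "\<bar>P r\<bar> \<le> \<bar>P R\<bar> + \<bar>Q R\<bar>" if r: "r \<ge> R" for r
  proof -
    have "P R \<le> P r"
    proof (rule DERIV_nonneg_imp_nondecreasing[OF r])
      fix t assume t: "R \<le> t" "t \<le> r"
      hence tp: "t > 0" using R by simp
      show "\<exists>y. (P has_real_derivative y) (at t) \<and> y \<ge> 0"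
        using DP[OF tp] prm bnd[OF tp] by auto
    qed
    moreover have "Q r \<le> Q R"
    proof (rule DERIV_nonpos_imp_nonincreasing[OF r])
      fix t assume t: "R \<le> t" "t \<le> r"
      hence tp: "t > 0" using R by simp
      define y where "y = \<beta> * f t * (u t)\<^sup>2 + B * (exp (- (2 * k) * t) * (- (2 * k)))"
      have "(Q has_real_derivative y) (at t)"
        unfolding Q_def y_def by (rule derivative_eq_intros DP[OF tp] refl | simp)+
      moreover have e1: "B * (exp (- (2 * k) * t) * (- (2 * k))) = - (\<beta> * C1\<^sup>2 * exp (- (2 * k) * t))"
        using k by (simp add: B_def field_simps)
      moreover have e2: "\<beta> * f t * (u t)\<^sup>2 \<le> \<beta> * C1\<^sup>2 * exp (- (2 * k) * t)" using ub t R by auto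
      have "y \<le> 0" unfolding y_def using e1 e2 by linarith
      ultimately show "\<exists>y. (Q has_real_derivative y) (at t) \<and> y \<le> 0" by blast
    qed
    moreover have "B * exp (- (2 * k) * r) \<ge> 0" using k prm by (simp add: B_def)
    ultimately show ?thesis unfolding Q_def by (simp add: abs_le_iff) linarith
  qed
  define M0 where "M0 = \<bar>P R\<bar> + \<bar>Q R\<bar>"
  define h where "h = (\<lambda>r. (1 - f r) - M0 / r)"
  have hmono: "h r \<le> h s" if rs: "R \<le> r" "r \<le> s" for r s
  proof (rule DERIV_nonneg_imp_nondecreasing[OF rs(2)])
    fix t assume t: "r \<le> t" "t \<le> s"
    hence tp: "t > 0" "t \<ge> R" using R rs by auto
    have "(h has_real_derivative - f' t + M0 / t\<^sup>2) (at t)"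
      unfolding h_def using tp by (auto intro!: derivative_eq_intros Df simp: power2_eq_square)
    moreover have "- f' t + M0 / t\<^sup>2 = (M0 - P t) / t\<^sup>2" using tp by (simp add: P_def field_simps)
    moreover have "M0 - P t \<ge> 0" using Pb[OF tp(2)] by (simp add: M0_def abs_le_iff)
    ultimately show "\<exists>y. (h has_real_derivative y) (at t) \<and> y \<ge> 0" by (intro exI conjI) auto
  qed
  have hlim: "(h \<longlongrightarrow> 0) at_top"
    unfolding h_def using tendsto_diff[OF tendsto_diff[OF tendsto_const[of 1] flim] inv_tendsto[of M0]] by simp
  have "h r \<le> 0" if r: "r \<ge> R" for r
  proof (rule tendsto_lowerbound[OF hlim])
    show "eventually (\<lambda>s. h r \<le> h s) at_top"
      using hmono[OF r] by (auto simp: eventually_at_top_linorder)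
  qed simp
  thus ?thesis using R by (intro exI[of _ M0] exI[of _ R]) (auto simp: h_def)
qed



lemma powr_d1: "x > 0 \<Longrightarrow> ((\<lambda>r. C * r powr p) has_real_derivative C * (p * x powr (p - 1))) (at x)"
  by (intro DERIV_cmult has_real_derivative_powr)

lemma powr_d2: "x > 0 \<Longrightarrow> ((\<lambda>r. C * (p * r powr (p - 1))) has_real_derivative C * (p * ((p - 1) * x powr (p - 2)))) (at x)"
  using DERIV_cmult[OF DERIV_cmult[OF has_real_derivative_powr[of x "p - 1"]], of p C] by (simp add: algebra_simps)

lemma powr_m1: "(x::real) > 0 \<Longrightarrow> x powr (a - 1) = x powr a / x"
  by (simp add: powr_diff)

lemma powr_m2: "(x::real) > 0 \<Longrightarrow> x powr (a - 2) = x powr a / x\<^sup>2"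
  by (simp add: powr_diff powr_numeral)

lemma powr_tendsto0: "p > 0 \<Longrightarrow> ((\<lambda>r::real. C * r powr p) \<longlongrightarrow> 0) (at_right 0)"
  by real_asymp

lemma u_near0:
  fixes u f u' u'' :: "real \<Rightarrow> real"
  assumes prm: "\<alpha> > 0" "\<beta> > 0"
    and Du: "\<And>x. x > 0 \<Longrightarrow> (u has_real_derivative u' x) (at x)"
    and Du2: "\<And>x. x > 0 \<Longrightarrow> (u' has_real_derivative u'' x) (at x)"
    and Eu: "\<And>x. x > 0 \<Longrightarrow> u'' x = \<alpha> * \<beta> / 2 * (f x)\<^sup>2 * u x + u x * ((u x)\<^sup>2 - 1) / x\<^sup>2"
    and bnd: "\<And>x. x > 0 \<Longrightarrow> 0 < u x \<and> u x < 1 \<and> 0 < f x \<and> f x < 1"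
    and ulim: "(u \<longlongrightarrow> 1) (at_right 0)"
    and p: "0 < p" "p < 2"
  shows "\<exists>C R. R > 0 \<and> (\<forall>r. 0 < r \<and> r < R \<longrightarrow> 1 - u r \<le> C * r powr p)"
proof -
  define \<theta> where "\<theta> = 2 - p * (p - 1)"
  have "(p - 2) * (p + 1) < 0" using p by (intro mult_neg_pos) auto
  hence \<theta>: "\<theta> > 0" unfolding \<theta>_def by (simp add: algebra_simps)
  have "((\<lambda>r. u r * (1 + u r)) \<longlongrightarrow> 1 * (1 + 1)) (at_right 0)"
    by (intro tendsto_intros ulim)
  moreover have "p * (p - 1) + \<theta> / 2 < 1 * (1 + 1)" using \<theta> by (simp add: \<theta>_def field_simps)
  ultimately have "eventually (\<lambda>r. u r * (1 + u r) > p * (p - 1) + \<theta> / 2) (at_right 0)"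
    by (rule order_tendstoD(1))
  then obtain R0 where R0: "R0 > 0" "\<And>r. r > 0 \<Longrightarrow> r < R0 \<Longrightarrow> u r * (1 + u r) > p * (p - 1) + \<theta> / 2"
    by (auto simp: eventually_at_right_field)
  define R where "R = R0 / 2"
  have R: "R > 0" "R < R0" using R0 by (auto simp: R_def)
  define C where "C = max ((\<alpha> * \<beta> / 2 + 1) * (2 / \<theta>) * R powr (2 - p)) (2 / R powr p)"
  have C1: "C \<ge> (\<alpha> * \<beta> / 2 + 1) * (2 / \<theta>) * R powr (2 - p)" and C2: "C \<ge> 2 / R powr p"
    by (auto simp: C_def)
  have Rp: "R powr p > 0" using R by simp
  have C0: "C > 0" using C2 Rp by (smt (verit) divide_pos_pos)
  define d where "d = (\<lambda>r. (1 - u r) - C * r powr p)"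
  have D1: "(d has_real_derivative - u' r - C * (p * r powr (p - 1))) (at r)" if r: "r > 0" for r
    unfolding d_def using DERIV_diff[OF DERIV_diff[OF DERIV_const[of 1] Du[OF r]] powr_d1[OF r, of C p]] by simp
  have dR: "d R < 0"
  proof -
    have "C * R powr p \<ge> 2 / R powr p * R powr p" using C2 Rp by (intro mult_right_mono) auto
    hence "C * R powr p \<ge> 2" using Rp by simp
    thus ?thesis using bnd[OF R(1)] by (simp add: d_def)
  qed
  have neg: "d x < 0" if x: "0 < x" "x < R" for x
  proof (rule maxp_int[where d = d and d' = "\<lambda>r. - u' r - C * (p * r powr (p - 1))"
          and d'' = "\<lambda>r. - u'' r - C * (p * ((p - 1) * r powr (p - 2)))" and a = 0 and b = R and La = 0 and Lb = "d R"])
    fix r assume r: "0 < r" "r < R"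
    show "(d has_real_derivative - u' r - C * (p * r powr (p - 1))) (at r)" by (rule D1[OF r(1)])
    show "((\<lambda>r. - u' r - C * (p * r powr (p - 1))) has_real_derivative - u'' r - C * (p * ((p - 1) * r powr (p - 2)))) (at r)"
      using DERIV_diff[OF DERIV_minus[OF Du2[OF r(1)]] powr_d2[OF r(1), of C p]] by simp
    assume h: "d r \<ge> 0" "- u' r - C * (p * r powr (p - 1)) = 0"
    obtain b: "0 < u r" "u r < 1" "0 < f r" "f r < 1" using bnd[OF r(1)] by auto
    define z where "z = C * r powr p"
    define Z2 where "Z2 = C * r powr (p - 2)"
    have Z2z: "Z2 = z / r\<^sup>2" using r by (simp add: Z2_def z_def powr_m2)
    have Z20: "Z2 > 0" using C0 r by (simp add: Z2_def)
    have W: "1 - u r \<ge> z" using h(1) by (simp add: d_def z_def)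
    have mu: "- u'' r = - (\<alpha> * \<beta> / 2 * (f r)\<^sup>2 * u r) + u r * (1 + u r) * (1 - u r) / r\<^sup>2"
      using Eu[OF r(1)] by (simp add: algebra_simps power2_eq_square diff_divide_distrib)
    have "u r * (1 + u r) * (1 - u r) / r\<^sup>2 \<ge> u r * (1 + u r) * z / r\<^sup>2"
      using W b r by (intro divide_right_mono mult_left_mono) auto
    also have "u r * (1 + u r) * z / r\<^sup>2 = u r * (1 + u r) * Z2" by (simp add: Z2z)
    also have "\<dots> \<ge> (p * (p - 1) + \<theta> / 2) * Z2"
      using R0(2)[of r] r R Z20 by (intro mult_right_mono) auto
    finally have t1: "u r * (1 + u r) * (1 - u r) / r\<^sup>2 \<ge> (p * (p - 1) + \<theta> / 2) * Z2" .
    have "(f r)\<^sup>2 * u r \<le> 1 * 1"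
      using b by (intro mult_mono) (auto simp: power_le_one abs_square_le_1)
    hence t2: "\<alpha> * \<beta> / 2 * (f r)\<^sup>2 * u r \<le> \<alpha> * \<beta> / 2"
      using prm by (simp add: mult.assoc mult_le_cancel_left1)
    have "r powr (p - 2) \<ge> R powr (p - 2)" using r p by (intro powr_mono2') auto
    hence "\<theta> / 2 * Z2 \<ge> \<theta> / 2 * (C * R powr (p - 2))"
      using \<theta> C0 unfolding Z2_def by (intro mult_left_mono) auto
    also have "\<theta> / 2 * (C * R powr (p - 2)) \<ge> \<theta> / 2 * ((\<alpha> * \<beta> / 2 + 1) * (2 / \<theta>) * R powr (2 - p) * R powr (p - 2))"
      using C1 \<theta> by (intro mult_left_mono mult_right_mono) auto
    also have "\<theta> / 2 * ((\<alpha> * \<beta> / 2 + 1) * (2 / \<theta>) * R powr (2 - p) * R powr (p - 2)) = \<alpha> * \<beta> / 2 + 1"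
    proof -
      have "R powr (2 - p) * R powr (p - 2) = 1" using R by (simp add: powr_add[symmetric])
      thus ?thesis using \<theta> by (simp add: field_simps)
    qed
    finally have t3: "\<theta> / 2 * Z2 \<ge> \<alpha> * \<beta> / 2 + 1" .
    have "- u'' r - C * (p * ((p - 1) * r powr (p - 2))) = - u'' r - p * (p - 1) * Z2"
      by (simp add: Z2_def algebra_simps)
    also have "\<dots> \<ge> - (\<alpha> * \<beta> / 2) + \<theta> / 2 * Z2"
    proof -
      have e: "(p * (p - 1) + \<theta> / 2) * Z2 = p * (p - 1) * Z2 + \<theta> / 2 * Z2" by (simp add: algebra_simps)
      show ?thesis using mu t1 t2 e by linarith
    qed
    finally show "- u'' r - C * (p * ((p - 1) * r powr (p - 2))) > 0" using t3 by linarith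
  next
    show "(d \<longlongrightarrow> 0) (at_right 0)"
      unfolding d_def using tendsto_diff[OF tendsto_diff[OF tendsto_const[of 1] ulim] powr_tendsto0[OF p(1), of C]] by simp
    show "(d \<longlongrightarrow> d R) (at_left R)" by (rule cont_left[OF DERIV_isCont[OF D1[OF R(1)]]])
  qed (use dR x in auto)
  show ?thesis using R neg by (rule_tac exI[of _ C], rule_tac exI[of _ R]) (auto simp: d_def less_imp_le)
qed



lemma f_near0:
  fixes u f f' f'' :: "real \<Rightarrow> real"
  assumes prm: "\<beta> > 0" "\<gamma> \<ge> 0"
    and Df: "\<And>x. x > 0 \<Longrightarrow> (f has_real_derivative f' x) (at x)"
    and Df2: "\<And>x. x > 0 \<Longrightarrow> (f' has_real_derivative f'' x) (at x)"
    and Ef: "\<And>x. x > 0 \<Longrightarrow> f'' x = - 2 / x * f' x + \<beta> / x\<^sup>2 * f x * (u x)\<^sup>2 + \<gamma> * f x * ((f x)\<^sup>2 - 1)"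
    and bnd: "\<And>x. x > 0 \<Longrightarrow> 0 < u x \<and> u x < 1 \<and> 0 < f x \<and> f x < 1"
    and flim: "(f \<longlongrightarrow> 0) (at_right 0)" and ulim: "(u \<longlongrightarrow> 1) (at_right 0)"
    and q: "0 < q" "q * (q + 1) < \<beta>"
  shows "\<exists>C R. R > 0 \<and> (\<forall>r. 0 < r \<and> r < R \<longrightarrow> f r \<le> C * r powr q)"
proof -
  define \<theta> where "\<theta> = \<beta> - q * (q + 1)"
  have \<theta>: "\<theta> > 0" using q by (simp add: \<theta>_def)
  have "((\<lambda>r. \<beta> * (u r)\<^sup>2 - \<gamma> * r\<^sup>2) \<longlongrightarrow> \<beta> * 1\<^sup>2 - \<gamma> * 0\<^sup>2) (at_right 0)"
    by (intro tendsto_intros ulim)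
  moreover have "q * (q + 1) + \<theta> / 2 < \<beta> * 1\<^sup>2 - \<gamma> * 0\<^sup>2" using \<theta> by (simp add: \<theta>_def field_simps)
  ultimately have "eventually (\<lambda>r. \<beta> * (u r)\<^sup>2 - \<gamma> * r\<^sup>2 > q * (q + 1) + \<theta> / 2) (at_right 0)"
    by (rule order_tendstoD(1))
  then obtain R0 where R0: "R0 > 0" "\<And>r. r > 0 \<Longrightarrow> r < R0 \<Longrightarrow> \<beta> * (u r)\<^sup>2 - \<gamma> * r\<^sup>2 > q * (q + 1) + \<theta> / 2"
    by (auto simp: eventually_at_right_field)
  define R where "R = R0 / 2"
  have R: "R > 0" "R < R0" using R0 by (auto simp: R_def)
  define C where "C = 2 / R powr q"
  have Rp: "R powr q > 0" using R by simp
  have C0: "C > 0" using Rp by (simp add: C_def)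
  define d where "d = (\<lambda>r. f r - C * r powr q)"
  have D1: "(d has_real_derivative f' r - C * (q * r powr (q - 1))) (at r)" if r: "r > 0" for r
    unfolding d_def using DERIV_diff[OF Df[OF r] powr_d1[OF r, of C q]] by simp
  have dR: "d R < 0"
  proof -
    have "C * R powr q = 2" using Rp by (simp add: C_def)
    thus ?thesis using bnd[OF R(1)] by (simp add: d_def)
  qed
  have neg: "d x < 0" if x: "0 < x" "x < R" for x
  proof (rule maxp_int[where d = d and d' = "\<lambda>r. f' r - C * (q * r powr (q - 1))"
          and d'' = "\<lambda>r. f'' r - C * (q * ((q - 1) * r powr (q - 2)))" and a = 0 and b = R and La = 0 and Lb = "d R"])
    fix r assume r: "0 < r" "r < R"
    show "(d has_real_derivative f' r - C * (q * r powr (q - 1))) (at r)" by (rule D1[OF r(1)])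
    show "((\<lambda>r. f' r - C * (q * r powr (q - 1))) has_real_derivative f'' r - C * (q * ((q - 1) * r powr (q - 2)))) (at r)"
      using DERIV_diff[OF Df2[OF r(1)] powr_d2[OF r(1), of C q]] by simp
    assume h: "d r \<ge> 0" "f' r - C * (q * r powr (q - 1)) = 0"
    obtain b: "0 < u r" "u r < 1" "0 < f r" "f r < 1" using bnd[OF r(1)] by auto
    define z where "z = C * r powr q"
    define Z2 where "Z2 = C * r powr (q - 2)"
    have Z2z: "Z2 = z / r\<^sup>2" using r by (simp add: Z2_def z_def powr_m2)
    have Z20: "Z2 > 0" using C0 r by (simp add: Z2_def)
    have fz: "f r \<ge> z" using h(1) by (simp add: d_def z_def)
    have "r powr (q - 1 - 1) = r powr (q - 1) / r" using r(1) by (rule powr_m1)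
    hence rq1: "r powr (q - 1) = r * r powr (q - 2)" using r by (simp add: field_simps)
    have f'r: "- 2 / r * f' r = - 2 * q * Z2"
      using h(2) r by (simp add: rq1 Z2_def field_simps)
    define X where "X = \<beta> * (u r)\<^sup>2 / r\<^sup>2 - \<gamma>"
    have Xe: "X = (\<beta> * (u r)\<^sup>2 - \<gamma> * r\<^sup>2) / r\<^sup>2" using r by (simp add: X_def field_simps)
    have "X \<ge> (q * (q + 1) + \<theta> / 2) / r\<^sup>2"
      unfolding Xe using R0(2)[of r] r R by (intro divide_right_mono) auto
    moreover have "(q * (q + 1) + \<theta> / 2) / r\<^sup>2 > 0" using q \<theta> r by (intro divide_pos_pos add_pos_pos mult_pos_pos) auto
    ultimately have X0: "X \<ge> 0" by linarith
    have "f'' r = - 2 * q * Z2 + f r * X + \<gamma> * f r * (f r)\<^sup>2"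
      using Ef[OF r(1)] f'r by (simp add: X_def algebra_simps)
    moreover have "\<gamma> * f r * (f r)\<^sup>2 \<ge> 0" using prm b by simp
    moreover have "f r * X \<ge> z * X" using fz X0 by (intro mult_right_mono) auto
    moreover have "z * X \<ge> z * ((q * (q + 1) + \<theta> / 2) / r\<^sup>2)"
      using \<open>X \<ge> (q * (q + 1) + \<theta> / 2) / r\<^sup>2\<close> Z20 Z2z r by (intro mult_left_mono) (auto simp: z_def C0 less_imp_le)
    moreover have "z * ((q * (q + 1) + \<theta> / 2) / r\<^sup>2) = (q * (q + 1) + \<theta> / 2) * Z2" by (simp add: Z2z)
    moreover have "C * (q * ((q - 1) * r powr (q - 2))) = q * (q - 1) * Z2" by (simp add: Z2_def algebra_simps)
    moreover have "(q * (q + 1) + \<theta> / 2) * Z2 = q * (q + 1) * Z2 + \<theta> / 2 * Z2" by (simp add: algebra_simps)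
    moreover have "- 2 * q * Z2 + q * (q + 1) * Z2 - q * (q - 1) * Z2 = 0" by (simp add: algebra_simps)
    moreover have "\<theta> / 2 * Z2 > 0" using \<theta> Z20 by simp
    ultimately show "f'' r - C * (q * ((q - 1) * r powr (q - 2))) > 0" by linarith
  next
    show "(d \<longlongrightarrow> 0) (at_right 0)"
      unfolding d_def using tendsto_diff[OF flim powr_tendsto0[OF q(1), of C]] by simp
    show "(d \<longlongrightarrow> d R) (at_left R)" by (rule cont_left[OF DERIV_isCont[OF D1[OF R(1)]]])
  qed (use dR x in auto)
  show ?thesis using R neg by (rule_tac exI[of _ C], rule_tac exI[of _ R]) (auto simp: d_def less_imp_le)
qed



lemma sq_lt1: "0 < e \<Longrightarrow> e < 1 \<Longrightarrow> (1 - e)\<^sup>2 < (1::real)"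
proof -
  assume "0 < e" "e < 1"
  hence "(1 - e)\<^sup>2 < 1\<^sup>2" by (intro power_strict_mono) auto
  thus ?thesis by simp
qed

theorem lemma3p3:
  fixes \<alpha> \<beta> \<gamma> :: real and u f :: "real \<Rightarrow> real"
  assumes "\<alpha> > 0" and "\<beta> > 0" and "\<gamma> \<ge> 0"
    and X: "admissible \<alpha> \<beta> \<gamma> u f"
    and minimizer: "\<And>v g. admissible \<alpha> \<beta> \<gamma> v g \<Longrightarrow> energy \<alpha> \<beta> \<gamma> u f \<le> energy \<alpha> \<beta> \<gamma> v g"
    and ode_u: "\<exists>u' u''. \<forall>r>0. (u has_real_derivative u' r) (at r) \<and>
                   (u' has_real_derivative u'' r) (at r) \<and>
                   u'' r = \<alpha> * \<beta> / 2 * (f r)\<^sup>2 * u r + u r * ((u r)\<^sup>2 - 1) / r\<^sup>2"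
    and ode_f: "\<exists>f' f''. \<forall>r>0. (f has_real_derivative f' r) (at r) \<and>
                   (f' has_real_derivative f'' r) (at r) \<and>
                   f'' r = - 2 / r * f' r + \<beta> / r\<^sup>2 * f r * (u r)\<^sup>2 + \<gamma> * f r * ((f r)\<^sup>2 - 1)"
  shows "(\<forall>r>0. 0 < u r \<and> u r < 1 \<and> 0 < f r \<and> f r < 1) \<and>
         (\<forall>\<epsilon>. 0 < \<epsilon> \<and> \<epsilon> < 1 \<longrightarrow>
            u \<in> O[at_top](\<lambda>r. exp (- sqrt (\<alpha> * \<beta> / 2) * (1 - \<epsilon>) * r)) \<and>
            (\<gamma> > 0 \<longrightarrow> (\<lambda>r. f r - 1) \<in>
               O[at_top](\<lambda>r. exp (- sqrt 2 * min (sqrt \<gamma>) (sqrt (\<alpha> * \<beta>)) * (1 - \<epsilon>) * r))) \<and>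
            (\<gamma> = 0 \<longrightarrow> (\<lambda>r. f r - 1) \<in> O[at_top](\<lambda>r. 1 / r)) \<and>
            (\<lambda>r. u r - 1) \<in> O[at_right 0](\<lambda>r. r powr (2 * (1 - \<epsilon>))) \<and>
            f \<in> O[at_right 0](\<lambda>r. r powr ((sqrt (1/4 + \<beta>) - 1/2) * (1 - \<epsilon>))))"
proof -
  have prm: "\<alpha> > 0" "\<beta> > 0" "\<gamma> \<ge> 0" by fact+
  obtain u' u'' where U: "\<forall>r>0. (u has_real_derivative u' r) (at r) \<and>
                   (u' has_real_derivative u'' r) (at r) \<and>
                   u'' r = \<alpha> * \<beta> / 2 * (f r)\<^sup>2 * u r + u r * ((u r)\<^sup>2 - 1) / r\<^sup>2"
    using ode_u by blast
  obtain f' f'' where FF: "\<forall>r>0. (f has_real_derivative f' r) (at r) \<and>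
                   (f' has_real_derivative f'' r) (at r) \<and>
                   f'' r = - 2 / r * f' r + \<beta> / r\<^sup>2 * f r * (u r)\<^sup>2 + \<gamma> * f r * ((f r)\<^sup>2 - 1)"
    using ode_f by blast
  have Du: "\<And>x. x > 0 \<Longrightarrow> (u has_real_derivative u' x) (at x)" using U by blast
  have Du2: "\<And>x. x > 0 \<Longrightarrow> (u' has_real_derivative u'' x) (at x)" using U by blast
  have Eu: "\<And>x. x > 0 \<Longrightarrow> u'' x = \<alpha> * \<beta> / 2 * (f x)\<^sup>2 * u x + u x * ((u x)\<^sup>2 - 1) / x\<^sup>2" using U by blast
  have Df: "\<And>x. x > 0 \<Longrightarrow> (f has_real_derivative f' x) (at x)" using FF by blast
  have Df2: "\<And>x. x > 0 \<Longrightarrow> (f' has_real_derivative f'' x) (at x)" using FF by blast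
  have Ef: "\<And>x. x > 0 \<Longrightarrow> f'' x = - 2 / x * f' x + \<beta> / x\<^sup>2 * f x * (u x)\<^sup>2 + \<gamma> * f x * ((f x)\<^sup>2 - 1)" using FF by blast
  have Xa: "(f \<longlongrightarrow> 0) (at_right 0)" "(u \<longlongrightarrow> 1) (at_right 0)" "(f \<longlongrightarrow> 1) at_top" "(u \<longlongrightarrow> 0) at_top"
    using X by (auto simp: admissible_def)
  have P1: "\<forall>r>0. 0 < u r \<and> u r < 1 \<and> 0 < f r \<and> f r < 1"
    by (rule part1[OF prm X minimizer Du Du2 Eu Df Df2 Ef])
  have bnd: "\<And>x. x > 0 \<Longrightarrow> 0 < u x \<and> u x < 1 \<and> 0 < f x \<and> f x < 1" using P1 by blast
  have bnd': "\<And>x. x > 0 \<Longrightarrow> 0 < u x \<and> 0 < f x \<and> f x < 1" using P1 by blast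
  have upos: "\<And>x. x > 0 \<Longrightarrow> u x > 0" using P1 by blast
  have udec: "\<And>k. k > 0 \<Longrightarrow> k\<^sup>2 < \<alpha> * \<beta> / 2 \<Longrightarrow> \<exists>C R. R > 0 \<and> (\<forall>r>R. u r \<le> C * exp (- k * r))"
    by (rule u_decay[OF prm(1,2) Du Du2 Eu upos Xa(3) Xa(4)])
  have P2: "u \<in> O[at_top](\<lambda>r. exp (- sqrt (\<alpha> * \<beta> / 2) * (1 - \<epsilon>) * r)) \<and>
            (\<gamma> > 0 \<longrightarrow> (\<lambda>r. f r - 1) \<in>
               O[at_top](\<lambda>r. exp (- sqrt 2 * min (sqrt \<gamma>) (sqrt (\<alpha> * \<beta>)) * (1 - \<epsilon>) * r))) \<and>
            (\<gamma> = 0 \<longrightarrow> (\<lambda>r. f r - 1) \<in> O[at_top](\<lambda>r. 1 / r)) \<and>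
            (\<lambda>r. u r - 1) \<in> O[at_right 0](\<lambda>r. r powr (2 * (1 - \<epsilon>))) \<and>
            f \<in> O[at_right 0](\<lambda>r. r powr ((sqrt (1/4 + \<beta>) - 1/2) * (1 - \<epsilon>)))"
    if eps: "0 < \<epsilon>" "\<epsilon> < 1" for \<epsilon>
  proof (intro conjI impI)
    define k where "k = sqrt (\<alpha> * \<beta> / 2) * (1 - \<epsilon>)"
    have k0: "k > 0" using prm eps by (simp add: k_def)
    have "k\<^sup>2 = \<alpha> * \<beta> / 2 * (1 - \<epsilon>)\<^sup>2" using prm by (simp add: k_def power_mult_distrib)
    also have "\<dots> < \<alpha> * \<beta> / 2 * 1"
      using prm eps by (intro mult_strict_left_mono) (use sq_lt1[OF eps] in auto)
    finally have k2: "k\<^sup>2 < \<alpha> * \<beta> / 2" by simp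
    obtain C R where R: "R > 0" "\<And>r. r > R \<Longrightarrow> u r \<le> C * exp (- k * r)" using udec[OF k0 k2] by blast
    show "u \<in> O[at_top](\<lambda>r. exp (- sqrt (\<alpha> * \<beta> / 2) * (1 - \<epsilon>) * r))"
    proof (rule bigoI[where c = C])
      have "eventually (\<lambda>r. r > R) at_top" by (rule eventually_gt_at_top)
      thus "eventually (\<lambda>r. norm (u r) \<le> C * norm (exp (- sqrt (\<alpha> * \<beta> / 2) * (1 - \<epsilon>) * r))) at_top"
      proof eventually_elim
        case (elim r)
        hence "r > 0" using R by simp
        thus ?case using R(2)[OF elim] upos[of r] by (simp add: k_def)
      qed
    qed
  next
    assume g: "\<gamma> > 0"
    define s where "s = min (sqrt \<gamma>) (sqrt (\<alpha> * \<beta>))"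
    define m where "m = sqrt 2 * s * (1 - \<epsilon>)"
    have s0: "s > 0" using g prm by (simp add: s_def)
    have s1: "s\<^sup>2 \<le> \<gamma>" "s\<^sup>2 \<le> \<alpha> * \<beta>"
    proof -
      have "s \<le> sqrt \<gamma>" "s \<le> sqrt (\<alpha> * \<beta>)" by (auto simp: s_def)
      hence "s\<^sup>2 \<le> (sqrt \<gamma>)\<^sup>2" "s\<^sup>2 \<le> (sqrt (\<alpha> * \<beta>))\<^sup>2" using s0 by (auto intro!: power_mono)
      thus "s\<^sup>2 \<le> \<gamma>" "s\<^sup>2 \<le> \<alpha> * \<beta>" using g prm by auto
    qed
    have m0: "m > 0" using s0 eps by (simp add: m_def)
    have "m\<^sup>2 = 2 * s\<^sup>2 * (1 - \<epsilon>)\<^sup>2" by (simp add: m_def power_mult_distrib)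
    also have "\<dots> < 2 * s\<^sup>2 * 1"
      using s0 eps by (intro mult_strict_left_mono) (use sq_lt1[OF eps] in auto)
    finally have m2: "m\<^sup>2 < 2 * s\<^sup>2" by simp
    have m3: "m\<^sup>2 < 2 * \<gamma>" "m\<^sup>2 < 2 * (\<alpha> * \<beta>)" using m2 s1 by auto
    obtain C R where R: "R > 0" "\<And>r. r > R \<Longrightarrow> 1 - f r \<le> C * exp (- m * r)"
      using f_decay[OF prm(1,2) g Df Df2 Ef bnd' Xa(3) udec m0 m3] by blast
    show "(\<lambda>r. f r - 1) \<in> O[at_top](\<lambda>r. exp (- sqrt 2 * min (sqrt \<gamma>) (sqrt (\<alpha> * \<beta>)) * (1 - \<epsilon>) * r))"
    proof (rule bigoI[where c = C])
      have "eventually (\<lambda>r. r > R) at_top" by (rule eventually_gt_at_top)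
      thus "eventually (\<lambda>r. norm (f r - 1) \<le> C * norm (exp (- sqrt 2 * min (sqrt \<gamma>) (sqrt (\<alpha> * \<beta>)) * (1 - \<epsilon>) * r))) at_top"
      proof eventually_elim
        case (elim r)
        hence "r > 0" using R by simp
        hence "\<bar>f r - 1\<bar> = 1 - f r" using bnd[of r] by simp
        thus ?case using R(2)[OF elim] by (simp add: m_def s_def)
      qed
    qed
  next
    assume g: "\<gamma> = 0"
    have Ef0: "\<And>x. x > 0 \<Longrightarrow> f'' x = - 2 / x * f' x + \<beta> / x\<^sup>2 * f x * (u x)\<^sup>2" using Ef g by simp
    obtain M R where R: "R > 0" "\<And>r. r > R \<Longrightarrow> 1 - f r \<le> M / r"
      using f_decay0[OF prm(1,2) Df Df2 Ef0 bnd' Xa(3) udec] by blast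
    show "(\<lambda>r. f r - 1) \<in> O[at_top](\<lambda>r. 1 / r)"
    proof (rule bigoI[where c = "\<bar>M\<bar>"])
      have "eventually (\<lambda>r. r > R) at_top" by (rule eventually_gt_at_top)
      thus "eventually (\<lambda>r. norm (f r - 1) \<le> \<bar>M\<bar> * norm (1 / r)) at_top"
      proof eventually_elim
        case (elim r)
        hence rp: "r > 0" using R by simp
        hence "\<bar>f r - 1\<bar> = 1 - f r" using bnd[of r] by simp
        moreover have "M / r \<le> \<bar>M\<bar> / r" using rp by (intro divide_right_mono) auto
        ultimately show ?case using R(2)[OF elim] rp by simp
      qed
    qed
  next
    define p where "p = 2 * (1 - \<epsilon>)"
    have p: "0 < p" "p < 2" using eps by (auto simp: p_def)
    obtain C R where R: "R > 0" "\<And>r. 0 < r \<Longrightarrow> r < R \<Longrightarrow> 1 - u r \<le> C * r powr p"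
      using u_near0[OF prm(1,2) Du Du2 Eu bnd Xa(2) p] by blast
    show "(\<lambda>r. u r - 1) \<in> O[at_right 0](\<lambda>r. r powr (2 * (1 - \<epsilon>)))"
    proof (rule bigoI[where c = C])
      show "eventually (\<lambda>r. norm (u r - 1) \<le> C * norm (r powr (2 * (1 - \<epsilon>)))) (at_right 0)"
        unfolding eventually_at_right_field
      proof (intro exI[of _ R] conjI allI impI)
        show "(0::real) < R" by fact
        fix r :: real assume r: "0 < r" "r < R"
        have "\<bar>u r - 1\<bar> = 1 - u r" using bnd[OF r(1)] by simp
        thus "norm (u r - 1) \<le> C * norm (r powr (2 * (1 - \<epsilon>)))" using R(2)[OF r] r by (simp add: p_def)
      qed
    qed
  next
    define a0 where "a0 = sqrt (1/4 + \<beta>) - 1/2"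
    have sq: "sqrt (1/4 + \<beta>) > 1/2"
    proof -
      have "sqrt (1/4 + \<beta>) > sqrt (1/4)" using prm by (intro real_sqrt_less_mono) auto
      moreover have "sqrt (1/4 :: real) = 1/2" by (simp add: real_sqrt_divide)
      ultimately show ?thesis by simp
    qed
    have a0: "a0 > 0" using sq by (simp add: a0_def)
    have a0b: "a0 * (a0 + 1) = \<beta>"
    proof -
      have "a0 * (a0 + 1) = (sqrt (1/4 + \<beta>))\<^sup>2 - 1/4" by (simp add: a0_def algebra_simps power2_eq_square)
      thus ?thesis using prm by simp
    qed
    define q where "q = a0 * (1 - \<epsilon>)"
    have q0: "q > 0" using a0 eps by (simp add: q_def)
    have qa: "q < a0" using a0 eps by (simp add: q_def)
    have "q * (q + 1) < a0 * (a0 + 1)" using q0 qa by (intro mult_strict_mono) auto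
    hence q1: "q * (q + 1) < \<beta>" using a0b by simp
    obtain C R where R: "R > 0" "\<And>r. 0 < r \<Longrightarrow> r < R \<Longrightarrow> f r \<le> C * r powr q"
      using f_near0[OF prm(2,3) Df Df2 Ef bnd Xa(1) Xa(2) q0 q1] by blast
    show "f \<in> O[at_right 0](\<lambda>r. r powr ((sqrt (1/4 + \<beta>) - 1/2) * (1 - \<epsilon>)))"
    proof (rule bigoI[where c = C])
      show "eventually (\<lambda>r. norm (f r) \<le> C * norm (r powr ((sqrt (1/4 + \<beta>) - 1/2) * (1 - \<epsilon>)))) (at_right 0)"
        unfolding eventually_at_right_field
      proof (intro exI[of _ R] conjI allI impI)
        show "(0::real) < R" by fact
        fix r :: real assume r: "0 < r" "r < R"
        have "\<bar>f r\<bar> = f r" using bnd[OF r(1)] by simp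
        thus "norm (f r) \<le> C * norm (r powr ((sqrt (1/4 + \<beta>) - 1/2) * (1 - \<epsilon>)))"
          using R(2)[OF r] r by (simp add: q_def a0_def)
      qed
    qed
  qed
  show ?thesis using P1 P2 by blast
qed

end
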